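(* Let $G=(V\cup C,E)$ be a protograph satisfying: every variable node has degree at least $2$; the degree-2 subgraph $G_2$ contains no cycle; every degree-2 variable node is joined by a path in $G$ to a variable node of degree at least $3$. Let $0\le\epsilon<\epsilon_{\mathrm{th}}$. Let $(G'_N)$ be a sequence of lifted graphs $G(T,\Pi)$ of $G$ with blocklength $N=T|V|\to\infty$ and girth $g_N\ge c\log N$ for a constant $c>0$. Consider the standard message-passing (belief-propagation) erasure decoder on the code with Tanner graph $G'_N$ over BEC$(\epsilon)$, run for $t_N$ iterations, where $t_N$ are integers with $4t_N<g_N$ and $t_N\ge c'\log N$ for some constant $c'>0$. Let $P_B(N)$ be the probability that at least one bit remains erased after decoding. Then there are constants $\beta,\gamma>0$ with $P_B(N)=O\bigl(N\exp(-\beta N^{\gamma})\bigr)$; in particular $N^kP_B(N)\to0$ for every $k>0$.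
   Context: A protograph is a finite bipartite multigraph $G=(V\cup C,E)$ with variable nodes $V$, check nodes $C$, and ordered edges $E=\{e_1,\dots,e_{|E|}\}$; parallel edges are allowed. $v(e),c(e)$ denote the variable and check endpoints of $e$; degrees count multiplicity. For an edge $e$, $E_c(e)=\{i: c(e_i)=c(e),\ e_i\neq e\}$ and $E_v(e)=\{i: v(e_i)=v(e),\ e_i\ne e\}$. The degree-2 subgraph $G_2$ consists of all degree-2 variable nodes, all edges incident to them, and the check nodes incident to those edges; a cycle in $G_2$ may have length $2$. Lifted graph: for $T\ge1$ and permutations $\Pi=\{\pi_e:e\in E\}$ of $\{1,\dots,T\}$, $G(T,\Pi)$ has variable nodes $(v,t)$, check nodes $(c,t)$, and for each edge $e$ and each $t$ an edge joining $(v(e),t)$ and $(c(e),\pi_e(t))$; it is the Tanner graph of a binary linear code of blocklength $T|V|$. In the erasure decoder, a check sends an erasure to a neighbouring bit iff some other incoming bit message is an erasure; a bit sends an erasure to a check iff its channel value and all incoming messages from its other checks are erasures; after $t$ iterations a bit is erased iff its channel value and all its incoming check messages are erasures. BEC density evolution: $x_0(i)=\epsilon$, $y_{t+1}(j)=1-\prod_{i\in E_c(e_j)}(1-x_t(i))$, $x_{t+1}(i)=\epsilon\prod_{j\in E_v(e_i)}y_{t+1}(j)$ (empty products equal 1), and $\epsilon_{\mathrm{th}}=\sup\{\epsilon:\max_ix_t(i)\to0\}$. Girth is the length of the shortest cycle. *)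

theory Defs
  imports Complex_Main "HOL-Library.Extended_Real" "HOL-Library.Landau_Symbols"
begin

text \<open>A protograph with variable nodes 0..<nV, check nodes 0..<nC and the ordered
  edge list E; edge i joins variable node fst (E!i) and check node snd (E!i).
  Parallel edges are allowed (repeated entries).\<close>

definition protograph :: "nat \<Rightarrow> nat \<Rightarrow> (nat \<times> nat) list \<Rightarrow> bool" where
  "protograph nV nC E \<longleftrightarrow> (\<forall>e\<in>set E. fst e < nV \<and> snd e < nC)"

definition vdeg :: "(nat \<times> nat) list \<Rightarrow> nat \<Rightarrow> nat" where
  "vdeg E v = length (filter (\<lambda>e. fst e = v) E)"

text \<open>Length-2 cycles (parallel edges) are included.\<close>

definition is_cycle :: "'e set \<Rightarrow> ('e \<Rightarrow> 'v \<times> 'v) \<Rightarrow> 'e list \<Rightarrow> 'v list \<Rightarrow> bool" where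
  "is_cycle Ed ends es vs \<longleftrightarrow>
     length es = length vs \<and> length es \<ge> 1 \<and> distinct es \<and> distinct vs \<and> set es \<subseteq> Ed \<and>
     (\<forall>j<length es. ends (es!j) = (vs!j, vs!((j+1) mod length es)) \<or>
                    ends (es!j) = (vs!((j+1) mod length es), vs!j))"

definition girth :: "'e set \<Rightarrow> ('e \<Rightarrow> 'v \<times> 'v) \<Rightarrow> enat" where
  "girth Ed ends = Inf {enat (length es) | es vs. is_cycle Ed ends es vs}"

text \<open>Protograph vertices: Inl v (variable), Inr c (check).\<close>

definition proto_ends :: "(nat \<times> nat) list \<Rightarrow> nat \<Rightarrow> (nat + nat) \<times> (nat + nat)" where
  "proto_ends E i = (Inl (fst (E!i)), Inr (snd (E!i)))"

text \<open>G_2 contains no cycle: no cycle using only edges incident to degree-2 variable nodes.\<close>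

definition deg2_acyclic :: "(nat \<times> nat) list \<Rightarrow> bool" where
  "deg2_acyclic E \<longleftrightarrow>
     \<not> (\<exists>es vs. is_cycle {i. i < length E \<and> vdeg E (fst (E!i)) = 2} (proto_ends E) es vs)"

definition proto_adj :: "(nat \<times> nat) list \<Rightarrow> ((nat + nat) \<times> (nat + nat)) set" where
  "proto_adj E = {(Inl (fst e), Inr (snd e)) | e. e \<in> set E} \<union>
                 {(Inr (snd e), Inl (fst e)) | e. e \<in> set E}"

text \<open>Lifted edges are pairs (i,t), i < |E|, t < T (copies indexed 0..<T); edge (i,t) joins
  variable node (v(e_i),t) and check node (c(e_i), pi i t).\<close>

definition lift_edges :: "(nat \<times> nat) list \<Rightarrow> nat \<Rightarrow> (nat \<times> nat) set" where
  "lift_edges E T = {(i, t). i < length E \<and> t < T}"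

definition lift_v :: "(nat \<times> nat) list \<Rightarrow> nat \<times> nat \<Rightarrow> nat \<times> nat" where
  "lift_v E e = (fst (E ! fst e), snd e)"

definition lift_c :: "(nat \<times> nat) list \<Rightarrow> (nat \<Rightarrow> nat \<Rightarrow> nat) \<Rightarrow> nat \<times> nat \<Rightarrow> nat \<times> nat" where
  "lift_c E \<pi> e = (snd (E ! fst e), \<pi> (fst e) (snd e))"

definition lift_ends ::
  "(nat \<times> nat) list \<Rightarrow> (nat \<Rightarrow> nat \<Rightarrow> nat) \<Rightarrow> nat \<times> nat \<Rightarrow> ((nat \<times> nat) + (nat \<times> nat)) \<times> ((nat \<times> nat) + (nat \<times> nat))" where
  "lift_ends E \<pi> e = (Inl (lift_v E e), Inr (lift_c E \<pi> e))"

definition lift_girth :: "(nat \<times> nat) list \<Rightarrow> nat \<Rightarrow> (nat \<Rightarrow> nat \<Rightarrow> nat) \<Rightarrow> enat" where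
  "lift_girth E T \<pi> = girth (lift_edges E T) (lift_ends E \<pi>)"

definition valid_lift :: "(nat \<times> nat) list \<Rightarrow> nat \<Rightarrow> (nat \<Rightarrow> nat \<Rightarrow> nat) \<Rightarrow> bool" where
  "valid_lift E T \<pi> \<longleftrightarrow> T \<ge> 1 \<and> (\<forall>i<length E. bij_betw (\<pi> i) {..<T} {..<T})"

text \<open>S = set of variable nodes (bits) erased by the channel. bmsg s e: the bit-to-check
  message on edge e in iteration s is an erasure (iteration 0: channel value).\<close>

definition lEc :: "(nat \<times> nat) list \<Rightarrow> nat \<Rightarrow> (nat \<Rightarrow> nat \<Rightarrow> nat) \<Rightarrow> nat \<times> nat \<Rightarrow> (nat \<times> nat) set" where
  "lEc E T \<pi> e = {e'\<in>lift_edges E T. lift_c E \<pi> e' = lift_c E \<pi> e \<and> e' \<noteq> e}"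

definition lEv :: "(nat \<times> nat) list \<Rightarrow> nat \<Rightarrow> nat \<times> nat \<Rightarrow> (nat \<times> nat) set" where
  "lEv E T e = {e'\<in>lift_edges E T. lift_v E e' = lift_v E e \<and> e' \<noteq> e}"

primrec bmsg :: "(nat \<times> nat) list \<Rightarrow> nat \<Rightarrow> (nat \<Rightarrow> nat \<Rightarrow> nat) \<Rightarrow> (nat \<times> nat) set \<Rightarrow>
                 nat \<Rightarrow> nat \<times> nat \<Rightarrow> bool" where
  "bmsg E T \<pi> S 0 e = (lift_v E e \<in> S)"
| "bmsg E T \<pi> S (Suc s) e = (lift_v E e \<in> S \<and>
      (\<forall>e'\<in>lEv E T e. \<exists>e''\<in>lEc E T \<pi> e'. bmsg E T \<pi> S s e''))"

text \<open>Check-to-bit message on e in iteration s+1 is an erasure.\<close>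

definition cmsg :: "(nat \<times> nat) list \<Rightarrow> nat \<Rightarrow> (nat \<Rightarrow> nat \<Rightarrow> nat) \<Rightarrow> (nat \<times> nat) set \<Rightarrow>
                 nat \<Rightarrow> nat \<times> nat \<Rightarrow> bool" where
  "cmsg E T \<pi> S s e = (\<exists>e'\<in>lEc E T \<pi> e. bmsg E T \<pi> S s e')"

text \<open>Bit b is erased after t iterations (for t = 0 only the channel value counts).\<close>

definition bit_erased :: "(nat \<times> nat) list \<Rightarrow> nat \<Rightarrow> (nat \<Rightarrow> nat \<Rightarrow> nat) \<Rightarrow> (nat \<times> nat) set \<Rightarrow>
                 nat \<Rightarrow> nat \<times> nat \<Rightarrow> bool" where
  "bit_erased E T \<pi> S t b = (b \<in> S \<and>
     (t = 0 \<or> (\<forall>e\<in>lift_edges E T. lift_v E e = b \<longrightarrow> cmsg E T \<pi> S (t - 1) e)))"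

definition lift_bits :: "nat \<Rightarrow> nat \<Rightarrow> (nat \<times> nat) set" where
  "lift_bits nV T = {(v, t). v < nV \<and> t < T}"

definition block_erasure_prob :: "nat \<Rightarrow> (nat \<times> nat) list \<Rightarrow> nat \<Rightarrow> (nat \<Rightarrow> nat \<Rightarrow> nat) \<Rightarrow>
                 real \<Rightarrow> nat \<Rightarrow> real" where
  "block_erasure_prob nV E T \<pi> \<epsilon> t =
     (\<Sum>S\<in>Pow (lift_bits nV T).
        \<epsilon> ^ card S * (1 - \<epsilon>) ^ (card (lift_bits nV T) - card S) *
        (if \<exists>b\<in>lift_bits nV T. bit_erased E T \<pi> S t b then 1 else 0))"

definition pEc :: "(nat \<times> nat) list \<Rightarrow> nat \<Rightarrow> nat set" where
  "pEc E j = {i. i < length E \<and> snd (E!i) = snd (E!j) \<and> i \<noteq> j}"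

definition pEv :: "(nat \<times> nat) list \<Rightarrow> nat \<Rightarrow> nat set" where
  "pEv E j = {i. i < length E \<and> fst (E!i) = fst (E!j) \<and> i \<noteq> j}"

primrec de_x :: "(nat \<times> nat) list \<Rightarrow> real \<Rightarrow> nat \<Rightarrow> nat \<Rightarrow> real" where
  "de_x E \<epsilon> 0 i = \<epsilon>"
| "de_x E \<epsilon> (Suc t) i =
     \<epsilon> * (\<Prod>j\<in>pEv E i. 1 - (\<Prod>k\<in>pEc E j. 1 - de_x E \<epsilon> t k))"

definition de_threshold :: "(nat \<times> nat) list \<Rightarrow> real" where
  "de_threshold E = Sup {\<epsilon> \<in> {0..1}. (\<lambda>t. Max (de_x E \<epsilon> t ` {..<length E})) \<longlonglongrightarrow> 0}"

end

theory Submission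
  imports Defs "HOL-Real_Asymp.Real_Asymp"
begin

definition walk :: "'e set \<Rightarrow> ('e \<Rightarrow> 'v \<times> 'v) \<Rightarrow> nat \<Rightarrow> (nat \<Rightarrow> 'e) \<Rightarrow> (nat \<Rightarrow> 'v) \<Rightarrow> bool" where
  "walk Ed ends k ee ve \<longleftrightarrow> (\<forall>j<k. ee j \<in> Ed \<and>
      (ends (ee j) = (ve j, ve (Suc j)) \<or> ends (ee j) = (ve (Suc j), ve j)))"

definition nbt :: "nat \<Rightarrow> (nat \<Rightarrow> 'e) \<Rightarrow> bool" where
  "nbt k ee \<longleftrightarrow> (\<forall>j. Suc j < k \<longrightarrow> ee j \<noteq> ee (Suc j))"

lemma closed_walk_cycle:
  assumes loopless: "\<forall>e\<in>Ed. fst (ends e) \<noteq> snd (ends e)"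
    and w: "walk Ed ends k ee ve" and nb: "nbt k ee" and cl: "ve k = ve 0" and k1: "k \<ge> 1"
  shows "girth Ed ends \<le> enat k"
proof -
  define P where "P = {(i,j). i < j \<and> j \<le> k \<and> ve i = ve j}"
  have "(0,k) \<in> P" using cl k1 by (auto simp: P_def)
  obtain p where pP: "p \<in> P" and pmin: "\<And>q. q \<in> P \<Longrightarrow> snd p - fst p \<le> snd q - fst q"
    using ex_has_least_nat[of "\<lambda>q. q \<in> P" "(0,k)" "\<lambda>q. snd q - fst q"] \<open>(0,k) \<in> P\<close> by blast
  obtain i j where p: "p = (i,j)" by (cases p)
  have ij: "i < j" "j \<le> k" "ve i = ve j" using pP p by (auto simp: P_def)
  define d where "d = j - i"
  have dmin: "\<And>a b. a < b \<Longrightarrow> b \<le> k \<Longrightarrow> ve a = ve b \<Longrightarrow> d \<le> b - a"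
    using pmin p unfolding P_def d_def by force
  have wi: "\<And>m. m < d \<Longrightarrow> ee (i+m) \<in> Ed \<and> (ends (ee (i+m)) = (ve (i+m), ve (Suc (i+m))) \<or> ends (ee (i+m)) = (ve (Suc (i+m)), ve (i+m)))"
    using w ij unfolding walk_def d_def by auto
  have d2: "d \<ge> 2"
  proof (rule ccontr)
    assume "\<not> d \<ge> 2"
    then have "d = 1" using ij d_def by auto
    then have "j = Suc i" using ij d_def by auto
    then show False using wi[of 0] \<open>d = 1\<close> ij loopless by auto
  qed
  define vs where "vs = map (\<lambda>m. ve (i+m)) [0..<d]"
  define es where "es = map (\<lambda>m. ee (i+m)) [0..<d]"
  have dvs: "distinct vs"
    unfolding vs_def distinct_map
  proof
    show "distinct [0..<d]" by simp
    show "inj_on (\<lambda>m. ve (i + m)) (set [0..<d])"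
    proof (rule inj_onI)
      fix a b assume a: "a \<in> set [0..<d]" and b: "b \<in> set [0..<d]" and e: "ve (i+a) = ve (i+b)"
      show "a = b"
      proof (rule ccontr)
        assume "a \<noteq> b"
        then consider "a < b" | "b < a" by linarith
        then show False
        proof cases
          case 1 then show ?thesis using dmin[of "i+a" "i+b"] a b e ij d_def by (simp; linarith)
        next
          case 2 then show ?thesis using dmin[of "i+b" "i+a"] a b e ij d_def by (simp; linarith)
        qed
      qed
    qed
  qed
  have vsn: "\<And>m. m < d \<Longrightarrow> vs ! m = ve (i+m)" by (simp add: vs_def)
  have esn: "\<And>m. m < d \<Longrightarrow> es ! m = ee (i+m)" by (simp add: es_def)
  have vdist: "\<And>a b. a < d \<Longrightarrow> b < d \<Longrightarrow> ve (i+a) = ve (i+b) \<Longrightarrow> a = b"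
    using dvs vsn by (metis distinct_conv_nth length_map length_upt minus_nat.diff_0 vs_def)
  have des: "distinct es"
    unfolding es_def distinct_map
  proof
    show "distinct [0..<d]" by simp
    show "inj_on (\<lambda>m. ee (i + m)) (set [0..<d])"
    proof -
      have key: "a = b" if a: "a < d" and b: "b < d" and ab: "a < b" and e: "ee (i+a) = ee (i+b)" for a b
      proof -
        have "ve (i+a) = ve (i+b) \<or> ve (Suc (i+a)) = ve (i+b)"
          using wi[OF a] wi[OF b] e loopless by auto
        then show ?thesis
        proof
          assume "ve (i+a) = ve (i+b)" then show ?thesis using vdist a b by auto
        next
          assume h: "ve (Suc (i+a)) = ve (i+b)"
          show ?thesis
          proof (cases "Suc a = b")
            case True
            then have "ee (i+a) \<noteq> ee (Suc (i+a))" using nb ij b d_def unfolding nbt_def by auto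
            then show ?thesis using e True by auto
          next
            case False
            then have "Suc a < b" using ab by auto
            then show ?thesis using vdist[of "Suc a" b] h b by auto
          qed
        qed
      qed
      show ?thesis
      proof (rule inj_onI)
        fix a b assume "a \<in> set [0..<d]" "b \<in> set [0..<d]" "ee (i+a) = ee (i+b)"
        then show "a = b" using key[of a b] key[of b a] by (cases a b rule: linorder_cases) auto
      qed
    qed
  qed
  have cyc: "is_cycle Ed ends es vs"
    unfolding is_cycle_def
  proof (intro conjI)
    show "length es = length vs" by (simp add: es_def vs_def)
    show "1 \<le> length es" using d2 by (simp add: es_def)
    show "distinct es" by (rule des)
    show "distinct vs" by (rule dvs)
    show "set es \<subseteq> Ed" using wi by (auto simp: es_def)
    show "\<forall>m<length es. ends (es ! m) = (vs ! m, vs ! ((m + 1) mod length es)) \<or>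
                       ends (es ! m) = (vs ! ((m + 1) mod length es), vs ! m)"
    proof (intro allI impI)
      fix m assume m: "m < length es"
      then have md: "m < d" by (simp add: es_def)
      have le: "length es = d" by (simp add: es_def)
      have "vs ! ((m+1) mod d) = ve (Suc (i+m))"
      proof (cases "Suc m = d")
        case True
        then have "(m+1) mod d = 0" by simp
        moreover have "Suc (i+m) = j" using True ij d_def by simp
        ultimately show ?thesis using vsn[of 0] d2 ij by simp
      next
        case False
        then have "Suc m < d" using md by auto
        then show ?thesis using vsn by auto
      qed
      then show "ends (es ! m) = (vs ! m, vs ! ((m + 1) mod length es)) \<or>
                       ends (es ! m) = (vs ! ((m + 1) mod length es), vs ! m)"
        using wi[OF md] esn[OF md] vsn[OF md] le by auto
    qed
  qed
  have "girth Ed ends \<le> enat (length es)"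
    unfolding girth_def using cyc by (auto intro!: Inf_lower)
  also have "length es \<le> k" using ij d_def by (simp add: es_def)
  finally show ?thesis by simp
qed

lemma walk_same_prefix:
  assumes loopless: "\<forall>e\<in>Ed. fst (ends e) \<noteq> snd (ends e)"
    and w1: "walk Ed ends k1 ee1 ve1" and w2: "walk Ed ends k2 ee2 ve2"
    and s: "ve1 0 = ve2 0" and agree: "\<And>i. i < j \<Longrightarrow> ee1 i = ee2 i"
    and jk: "j \<le> k1" "j \<le> k2"
  shows "i \<le> j \<Longrightarrow> ve1 i = ve2 i"
proof (induction i)
  case 0 then show ?case using s by simp
next
  case (Suc i)
  then have h: "ve1 i = ve2 i" "i < j" by auto
  have a: "ee1 i \<in> Ed \<and> (ends (ee1 i) = (ve1 i, ve1 (Suc i)) \<or> ends (ee1 i) = (ve1 (Suc i), ve1 i))"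
    using w1 h jk unfolding walk_def by (meson less_le_trans)
  have b: "ee2 i \<in> Ed \<and> (ends (ee2 i) = (ve2 i, ve2 (Suc i)) \<or> ends (ee2 i) = (ve2 (Suc i), ve2 i))"
    using w2 h jk unfolding walk_def by (meson less_le_trans)
  show ?case using a b agree[OF h(2)] h(1) loopless by (metis fst_conv snd_conv)
qed

lemma two_walks_cycle:
  assumes loopless: "\<forall>e\<in>Ed. fst (ends e) \<noteq> snd (ends e)"
    and w1: "walk Ed ends k1 ee1 ve1" and w2: "walk Ed ends k2 ee2 ve2"
    and nb1: "nbt k1 ee1" and nb2: "nbt k2 ee2"
    and s: "ve1 0 = ve2 0" and t: "ve1 k1 = ve2 k2"
    and j0: "j0 < k1" "j0 < k2" "ee1 j0 \<noteq> ee2 j0"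
  shows "girth Ed ends \<le> enat (k1 + k2)"
proof -
  define j where "j = (LEAST j. j < k1 \<and> j < k2 \<and> ee1 j \<noteq> ee2 j)"
  have jp: "j < k1" "j < k2" "ee1 j \<noteq> ee2 j"
    using LeastI[of "\<lambda>j. j < k1 \<and> j < k2 \<and> ee1 j \<noteq> ee2 j" j0] j0 unfolding j_def by auto
  have agree: "\<And>i. i < j \<Longrightarrow> ee1 i = ee2 i"
    using not_less_Least[of _ "\<lambda>j. j < k1 \<and> j < k2 \<and> ee1 j \<noteq> ee2 j"] jp unfolding j_def
    by (metis order.strict_trans)
  have vj: "ve1 j = ve2 j"
    using walk_same_prefix[OF loopless w1 w2 s agree] jp by auto
  define a where "a = k1 - j"
  define K where "K = a + (k2 - j)"
  define ve where "ve = (\<lambda>m. if m \<le> a then ve1 (k1 - m) else ve2 (j + (m - a)))"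
  define ee where "ee = (\<lambda>m. if m < a then ee1 (k1 - Suc m) else ee2 (j + (m - a)))"
  have W1: "\<And>i. i < k1 \<Longrightarrow> ee1 i \<in> Ed \<and> (ends (ee1 i) = (ve1 i, ve1 (Suc i)) \<or> ends (ee1 i) = (ve1 (Suc i), ve1 i))"
    using w1 unfolding walk_def by auto
  have W2: "\<And>i. i < k2 \<Longrightarrow> ee2 i \<in> Ed \<and> (ends (ee2 i) = (ve2 i, ve2 (Suc i)) \<or> ends (ee2 i) = (ve2 (Suc i), ve2 i))"
    using w2 unfolding walk_def by auto
  have "walk Ed ends K ee ve"
    unfolding walk_def
  proof (intro allI impI)
    fix m assume m: "m < K"
    show "ee m \<in> Ed \<and> (ends (ee m) = (ve m, ve (Suc m)) \<or> ends (ee m) = (ve (Suc m), ve m))"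
    proof (cases "m < a")
      case True
      have e: "ee m = ee1 (k1 - Suc m)" using True by (simp add: ee_def)
      have v: "ve m = ve1 (Suc (k1 - Suc m))" "ve (Suc m) = ve1 (k1 - Suc m)"
        using True a_def jp by (auto simp: ve_def Suc_diff_Suc)
      show ?thesis using W1[of "k1 - Suc m"] e v jp by auto
    next
      case False
      define r where "r = m - a"
      have r: "j + r < k2" using m False K_def r_def by auto
      have e: "ee m = ee2 (j + r)" using False by (simp add: ee_def r_def)
      have v1: "ve m = ve2 (j + r)"
      proof (cases "m = a")
        case True then show ?thesis using vj jp by (simp add: ve_def r_def a_def)
      next
        case False then show ?thesis using \<open>\<not> m < a\<close> by (simp add: ve_def r_def)
      qed
      have v2: "ve (Suc m) = ve2 (Suc (j + r))" using False by (simp add: ve_def r_def Suc_diff_le)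
      show ?thesis using W2[OF r] e v1 v2 by auto
    qed
  qed
  moreover have "nbt K ee"
    unfolding nbt_def
  proof (intro allI impI)
    fix m assume m: "Suc m < K"
    consider "Suc m < a" | "Suc m = a" | "m \<ge> a" by linarith
    then show "ee m \<noteq> ee (Suc m)"
    proof cases
      case 1
      then have "ee1 (k1 - Suc (Suc m)) \<noteq> ee1 (Suc (k1 - Suc (Suc m)))"
        using nb1 a_def unfolding nbt_def by auto
      moreover have "Suc (k1 - Suc (Suc m)) = k1 - Suc m" using 1 a_def by auto
      ultimately show ?thesis using 1 by (simp add: ee_def)
    next
      case 2
      then have "ee m = ee1 j" "ee (Suc m) = ee2 j" using a_def jp by (auto simp: ee_def)
      then show ?thesis using jp by simp
    next
      case 3
      have "Suc (j + (m - a)) < k2" using m 3 K_def by auto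
      then have "ee2 (j + (m - a)) \<noteq> ee2 (Suc (j + (m - a)))" using nb2 unfolding nbt_def by auto
      then show ?thesis using 3 by (simp add: ee_def Suc_diff_le)
    qed
  qed
  moreover have "ve K = ve 0"
    using t jp by (simp add: ve_def K_def a_def)
  moreover have "K \<ge> 1" using jp K_def a_def by auto
  ultimately have "girth Ed ends \<le> enat K" using closed_walk_cycle[OF loopless] by blast
  also have "K \<le> k1 + k2" using K_def a_def by auto
  finally show ?thesis by simp
qed

definition wt :: "real \<Rightarrow> 'a set \<Rightarrow> 'a set \<Rightarrow> real" where
  "wt \<epsilon> B S = \<epsilon> ^ card S * (1 - \<epsilon>) ^ (card B - card S)"

definition mu :: "real \<Rightarrow> 'a set \<Rightarrow> ('a set \<Rightarrow> bool) \<Rightarrow> real" where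
  "mu \<epsilon> B Q = (\<Sum>S\<in>Pow B. wt \<epsilon> B S * (if Q S then 1 else 0))"

definition dep :: "('a set \<Rightarrow> bool) \<Rightarrow> 'a set \<Rightarrow> bool" where
  "dep Q A \<longleftrightarrow> (\<forall>S. Q S = Q (S \<inter> A))"

lemma mu_factor:
  assumes fA: "finite A" and fC: "finite C" and disj: "A \<inter> C = {}"
    and dP: "dep P A" and dR: "dep R C"
  shows "mu \<epsilon> (A \<union> C) (\<lambda>S. P S \<and> R S) = mu \<epsilon> A P * mu \<epsilon> C R"
proof -
  let ?g = "\<lambda>(X,Y). X \<union> Y"
  have bij: "bij_betw ?g (Pow A \<times> Pow C) (Pow (A \<union> C))"
  proof (rule bij_betw_imageI)
    show "inj_on ?g (Pow A \<times> Pow C)"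
    proof (rule inj_onI)
      fix p q assume pq: "p \<in> Pow A \<times> Pow C" "q \<in> Pow A \<times> Pow C" "?g p = ?g q"
      obtain X Y where p: "p = (X,Y)" by (cases p)
      obtain X' Y' where q: "q = (X',Y')" by (cases q)
      have h: "X \<subseteq> A" "Y \<subseteq> C" "X' \<subseteq> A" "Y' \<subseteq> C" "X \<union> Y = X' \<union> Y'" using pq p q by auto
      have "X = (X \<union> Y) \<inter> A" using h(1,2) disj by auto
      also have "\<dots> = (X' \<union> Y') \<inter> A" using h(5) by simp
      also have "\<dots> = X'" using h(3,4) disj by auto
      finally have x: "X = X'" .
      have "Y = (X \<union> Y) \<inter> C" using h(1,2) disj by auto
      also have "\<dots> = (X' \<union> Y') \<inter> C" using h(5) by simp
      also have "\<dots> = Y'" using h(3,4) disj by auto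
      finally have "Y = Y'" .
      then show "p = q" using x p q by simp
    qed
    show "?g ` (Pow A \<times> Pow C) = Pow (A \<union> C)"
    proof
      show "?g ` (Pow A \<times> Pow C) \<subseteq> Pow (A \<union> C)" by auto
      show "Pow (A \<union> C) \<subseteq> ?g ` (Pow A \<times> Pow C)"
      proof
        fix S assume "S \<in> Pow (A \<union> C)"
        then have "S = ?g (S \<inter> A, S \<inter> C)" "(S \<inter> A, S \<inter> C) \<in> Pow A \<times> Pow C" by auto
        then show "S \<in> ?g ` (Pow A \<times> Pow C)" by blast
      qed
    qed
  qed
  have tm: "wt \<epsilon> (A \<union> C) (X \<union> Y) * (if P (X \<union> Y) \<and> R (X \<union> Y) then 1 else 0)
      = (wt \<epsilon> A X * (if P X then 1 else 0)) * (wt \<epsilon> C Y * (if R Y then 1 else 0))"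
    if X: "X \<subseteq> A" and Y: "Y \<subseteq> C" for X Y
  proof -
    have fX: "finite X" using X fA finite_subset by auto
    have fY: "finite Y" using Y fC finite_subset by auto
    have dXY: "X \<inter> Y = {}" using X Y disj by auto
    have c1: "card (X \<union> Y) = card X + card Y" using card_Un_disjoint[OF fX fY dXY] .
    have c2: "card (A \<union> C) = card A + card C" using card_Un_disjoint[OF fA fC disj] .
    have cX: "card X \<le> card A" using card_mono[OF fA X] .
    have cY: "card Y \<le> card C" using card_mono[OF fC Y] .
    have e: "card (A \<union> C) - card (X \<union> Y) = (card A - card X) + (card C - card Y)"
      using c1 c2 cX cY by simp
    have w: "wt \<epsilon> (A \<union> C) (X \<union> Y) = wt \<epsilon> A X * wt \<epsilon> C Y"
      unfolding wt_def by (subst e) (simp add: c1 power_add algebra_simps)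
    have p: "P (X \<union> Y) = P X"
    proof -
      have "(X \<union> Y) \<inter> A = X" using X Y disj by auto
      then show ?thesis using dP unfolding dep_def by (metis Int_absorb2 X)
    qed
    have r: "R (X \<union> Y) = R Y"
    proof -
      have "(X \<union> Y) \<inter> C = Y" using X Y disj by auto
      then show ?thesis using dR unfolding dep_def by (metis Int_absorb2 Y)
    qed
    show ?thesis using w p r by simp
  qed
  have "mu \<epsilon> (A \<union> C) (\<lambda>S. P S \<and> R S) =
        (\<Sum>p\<in>Pow A \<times> Pow C. wt \<epsilon> (A \<union> C) (?g p) * (if P (?g p) \<and> R (?g p) then 1 else 0))"
    unfolding mu_def using sum.reindex_bij_betw[OF bij, symmetric] by simp
  also have "\<dots> = (\<Sum>p\<in>Pow A \<times> Pow C. (wt \<epsilon> A (fst p) * (if P (fst p) then 1 else 0)) *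
                      (wt \<epsilon> C (snd p) * (if R (snd p) then 1 else 0)))"
  proof (rule sum.cong)
    fix p assume "p \<in> Pow A \<times> Pow C"
    then obtain X Y where p: "p = (X,Y)" "X \<subseteq> A" "Y \<subseteq> C" by (cases p) auto
    show "wt \<epsilon> (A \<union> C) (?g p) * (if P (?g p) \<and> R (?g p) then 1 else 0) =
      (wt \<epsilon> A (fst p) * (if P (fst p) then 1 else 0)) * (wt \<epsilon> C (snd p) * (if R (snd p) then 1 else 0))"
      using tm[OF p(2,3)] unfolding p(1) by (simp only: fst_conv snd_conv prod.case)
  qed simp
  also have "\<dots> = mu \<epsilon> A P * mu \<epsilon> C R"
    unfolding mu_def sum_product sum.cartesian_product by (simp add: case_prod_beta')
  finally show ?thesis .
qed

lemma dep_True: "dep (\<lambda>S. True) A" by (simp add: dep_def)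

lemma mu_single_set: "mu \<epsilon> {x} (\<lambda>S. True) = 1"
proof -
  have "Pow {x} = {{}, {x}}" by auto
  then show ?thesis by (simp add: mu_def wt_def)
qed

lemma mu_total: "finite B \<Longrightarrow> mu \<epsilon> B (\<lambda>S. True) = 1"
proof (induction B rule: finite_induct)
  case empty then show ?case by (simp add: mu_def wt_def)
next
  case (insert x B)
  have "mu \<epsilon> ({x} \<union> B) (\<lambda>S. True \<and> True) = mu \<epsilon> {x} (\<lambda>S. True) * mu \<epsilon> B (\<lambda>S. True)"
    by (rule mu_factor) (use insert in \<open>auto simp: dep_True\<close>)
  then show ?case using insert mu_single_set by simp
qed

lemma mu_local:
  assumes "finite B" "A \<subseteq> B" "dep P A"
  shows "mu \<epsilon> B P = mu \<epsilon> A P"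
proof -
  have fA: "finite A" using assms finite_subset by auto
  have "mu \<epsilon> (A \<union> (B - A)) (\<lambda>S. P S \<and> True) = mu \<epsilon> A P * mu \<epsilon> (B - A) (\<lambda>S. True)"
    by (rule mu_factor) (use assms fA in \<open>auto simp: dep_True\<close>)
  moreover have "A \<union> (B - A) = B" using assms by auto
  ultimately show ?thesis using mu_total[of "B - A" \<epsilon>] assms by simp
qed

lemma dep_mono: "dep P A \<Longrightarrow> A \<subseteq> A' \<Longrightarrow> dep P A'"
  unfolding dep_def by (metis Int_assoc inf.absorb_iff2)

lemma mu_indep2:
  assumes fB: "finite B" and AB: "A \<subseteq> B" and CB: "C \<subseteq> B" and disj: "A \<inter> C = {}"
    and dP: "dep P A" and dR: "dep R C"
  shows "mu \<epsilon> B (\<lambda>S. P S \<and> R S) = mu \<epsilon> B P * mu \<epsilon> B R"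
proof -
  have fA: "finite A" and fC: "finite C" using AB CB fB finite_subset by auto
  have dPR: "dep (\<lambda>S. P S \<and> R S) (A \<union> C)"
    using dep_mono[OF dP, of "A \<union> C"] dep_mono[OF dR, of "A \<union> C"] unfolding dep_def by auto
  have "mu \<epsilon> B (\<lambda>S. P S \<and> R S) = mu \<epsilon> (A \<union> C) (\<lambda>S. P S \<and> R S)"
    using mu_local[OF fB _ dPR] AB CB by auto
  also have "\<dots> = mu \<epsilon> A P * mu \<epsilon> C R" by (rule mu_factor[OF fA fC disj dP dR])
  also have "\<dots> = mu \<epsilon> B P * mu \<epsilon> B R" using mu_local[OF fB AB dP] mu_local[OF fB CB dR] by simp
  finally show ?thesis .
qed

lemma mu_not:
  assumes "finite B"
  shows "mu \<epsilon> B (\<lambda>S. \<not> P S) = 1 - mu \<epsilon> B P"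
proof -
  have "mu \<epsilon> B (\<lambda>S. \<not> P S) + mu \<epsilon> B P = mu \<epsilon> B (\<lambda>S. True)"
    unfolding mu_def sum.distrib[symmetric] by (rule sum.cong) auto
  then show ?thesis using mu_total[OF assms] by simp
qed

lemma mu_all:
  assumes fB: "finite B" and fI: "finite I"
    and DB: "\<And>i. i \<in> I \<Longrightarrow> D i \<subseteq> B"
    and disj: "\<And>i j. i \<in> I \<Longrightarrow> j \<in> I \<Longrightarrow> i \<noteq> j \<Longrightarrow> D i \<inter> D j = {}"
    and dQ: "\<And>i. i \<in> I \<Longrightarrow> dep (Q i) (D i)"
  shows "mu \<epsilon> B (\<lambda>S. \<forall>i\<in>I. Q i S) = (\<Prod>i\<in>I. mu \<epsilon> B (Q i))"
  using fI DB disj dQ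
proof (induction I rule: finite_induct)
  case empty then show ?case using mu_total[OF fB] by simp
next
  case (insert i I)
  have d1: "dep (\<lambda>S. \<forall>j\<in>I. Q j S) (\<Union>j\<in>I. D j)"
    unfolding dep_def
  proof
    fix S
    have "\<And>j. j \<in> I \<Longrightarrow> Q j S = Q j (S \<inter> (\<Union>j\<in>I. D j))"
    proof -
      fix j assume j: "j \<in> I"
      have "dep (Q j) (D j)" using insert.prems(3)[of j] j by simp
      moreover have "D j \<subseteq> (\<Union>j\<in>I. D j)" using j by auto
      ultimately have "dep (Q j) (\<Union>j\<in>I. D j)" by (rule dep_mono)
      then show "Q j S = Q j (S \<inter> (\<Union>j\<in>I. D j))" unfolding dep_def by blast
    qed
    then show "(\<forall>j\<in>I. Q j S) = (\<forall>j\<in>I. Q j (S \<inter> (\<Union>j\<in>I. D j)))" by blast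
  qed
  have "mu \<epsilon> B (\<lambda>S. \<forall>j\<in>insert i I. Q j S) = mu \<epsilon> B (\<lambda>S. Q i S \<and> (\<forall>j\<in>I. Q j S))" by simp
  also have "\<dots> = mu \<epsilon> B (Q i) * mu \<epsilon> B (\<lambda>S. \<forall>j\<in>I. Q j S)"
  proof (rule mu_indep2[OF fB _ _ _ _ d1])
    show "D i \<subseteq> B" using insert.prems by auto
    show "(\<Union>j\<in>I. D j) \<subseteq> B" using insert.prems by auto
    show "D i \<inter> (\<Union>j\<in>I. D j) = {}"
    proof -
      have "\<And>j. j \<in> I \<Longrightarrow> D i \<inter> D j = {}"
      proof -
        fix j assume "j \<in> I"
        then have "j \<in> insert i I" "i \<noteq> j" using insert.hyps by auto
        then show "D i \<inter> D j = {}" using insert.prems(2)[of i j] by simp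
      qed
      then show ?thesis by blast
    qed
    show "dep (Q i) (D i)" using insert.prems by auto
  qed
  also have "mu \<epsilon> B (\<lambda>S. \<forall>j\<in>I. Q j S) = (\<Prod>j\<in>I. mu \<epsilon> B (Q j))"
    by (rule insert.IH) (use insert.prems in auto)
  also have "mu \<epsilon> B (Q i) * (\<Prod>j\<in>I. mu \<epsilon> B (Q j)) = (\<Prod>j\<in>insert i I. mu \<epsilon> B (Q j))"
    using insert.hyps by (simp add: prod.insert)
  finally show ?case .
qed

lemma mu_ex:
  assumes fB: "finite B" and fI: "finite I"
    and DB: "\<And>i. i \<in> I \<Longrightarrow> D i \<subseteq> B"
    and disj: "\<And>i j. i \<in> I \<Longrightarrow> j \<in> I \<Longrightarrow> i \<noteq> j \<Longrightarrow> D i \<inter> D j = {}"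
    and dQ: "\<And>i. i \<in> I \<Longrightarrow> dep (Q i) (D i)"
  shows "mu \<epsilon> B (\<lambda>S. \<exists>i\<in>I. Q i S) = 1 - (\<Prod>i\<in>I. 1 - mu \<epsilon> B (Q i))"
proof -
  have dn: "\<And>i. i \<in> I \<Longrightarrow> dep (\<lambda>S. \<not> Q i S) (D i)"
  proof -
    fix i assume "i \<in> I"
    then have "\<forall>S. Q i S = Q i (S \<inter> D i)" using dQ unfolding dep_def by blast
    then show "dep (\<lambda>S. \<not> Q i S) (D i)" unfolding dep_def by blast
  qed
  have eq: "(\<lambda>S. \<exists>i\<in>I. Q i S) = (\<lambda>S. \<not> (\<forall>i\<in>I. \<not> Q i S))" by auto
  have "mu \<epsilon> B (\<lambda>S. \<exists>i\<in>I. Q i S) = 1 - mu \<epsilon> B (\<lambda>S. \<forall>i\<in>I. \<not> Q i S)"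
    unfolding eq by (rule mu_not[OF fB])
  also have "mu \<epsilon> B (\<lambda>S. \<forall>i\<in>I. \<not> Q i S) = (\<Prod>i\<in>I. mu \<epsilon> B (\<lambda>S. \<not> Q i S))"
    by (rule mu_all[OF fB fI DB disj dn])
  also have "\<dots> = (\<Prod>i\<in>I. 1 - mu \<epsilon> B (Q i))" by (rule prod.cong) (rule refl, rule mu_not[OF fB])
  finally show ?thesis .
qed

lemma wt_nonneg: "0 \<le> \<epsilon> \<Longrightarrow> \<epsilon> \<le> 1 \<Longrightarrow> 0 \<le> wt \<epsilon> B S"
  unfolding wt_def by simp

lemma mu_mono:
  assumes "0 \<le> \<epsilon>" "\<epsilon> \<le> 1" "\<And>S. S \<subseteq> B \<Longrightarrow> P S \<Longrightarrow> R S"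
  shows "mu \<epsilon> B P \<le> mu \<epsilon> B R"
  unfolding mu_def
proof (rule sum_mono)
  fix S assume "S \<in> Pow B"
  then have "P S \<Longrightarrow> R S" using assms(3) by auto
  moreover have "0 \<le> wt \<epsilon> B S" using wt_nonneg assms(1,2) by blast
  ultimately show "wt \<epsilon> B S * (if P S then 1 else 0) \<le> wt \<epsilon> B S * (if R S then 1 else 0)"
    by (cases "P S"; cases "R S") auto
qed

lemma mu_union:
  assumes "0 \<le> \<epsilon>" "\<epsilon> \<le> 1" "finite I"
  shows "mu \<epsilon> B (\<lambda>S. \<exists>i\<in>I. Q i S) \<le> (\<Sum>i\<in>I. mu \<epsilon> B (Q i))"
proof -
  have "mu \<epsilon> B (\<lambda>S. \<exists>i\<in>I. Q i S) \<le> (\<Sum>S\<in>Pow B. \<Sum>i\<in>I. wt \<epsilon> B S * (if Q i S then 1 else 0))"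
    unfolding mu_def
  proof (rule sum_mono)
    fix S
    have w: "0 \<le> wt \<epsilon> B S" using wt_nonneg assms by auto
    show "wt \<epsilon> B S * (if \<exists>i\<in>I. Q i S then 1 else 0) \<le> (\<Sum>i\<in>I. wt \<epsilon> B S * (if Q i S then 1 else 0))"
    proof (cases "\<exists>i\<in>I. Q i S")
      case True
      then obtain i where i: "i \<in> I" "Q i S" by auto
      have "wt \<epsilon> B S * (if Q i S then 1 else 0) \<le> (\<Sum>i\<in>I. wt \<epsilon> B S * (if Q i S then 1 else 0))"
        by (rule member_le_sum) (use i w assms in auto)
      then show ?thesis using i True by simp
    next
      case False then show ?thesis using w by (simp add: sum_nonneg)
    qed
  qed
  also have "\<dots> = (\<Sum>i\<in>I. mu \<epsilon> B (Q i))" unfolding mu_def by (rule sum.swap)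
  finally show ?thesis .
qed

lemma mu_single:
  assumes "finite B" "b \<in> B"
  shows "mu \<epsilon> B (\<lambda>S. b \<in> S) = \<epsilon>"
proof -
  have d: "dep (\<lambda>S. b \<in> S) {b}" unfolding dep_def by auto
  have "mu \<epsilon> B (\<lambda>S. b \<in> S) = mu \<epsilon> {b} (\<lambda>S. b \<in> S)" using mu_local[OF assms(1) _ d] assms(2) by blast
  also have "\<dots> = \<epsilon>" proof -
    have "Pow {b} = {{}, {b}}" by auto
    then show ?thesis by (simp add: mu_def wt_def)
  qed
  finally show ?thesis .
qed

primrec Dset :: "(nat \<times> nat) list \<Rightarrow> nat \<Rightarrow> (nat \<Rightarrow> nat \<Rightarrow> nat) \<Rightarrow> nat \<Rightarrow> nat \<times> nat \<Rightarrow> (nat \<times> nat) set" where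
  "Dset E T \<pi> 0 e = {lift_v E e}"
| "Dset E T \<pi> (Suc s) e = insert (lift_v E e) (\<Union>e'\<in>lEv E T e. \<Union>e''\<in>lEc E T \<pi> e'. Dset E T \<pi> s e'')"

lemma bmsg_local:
  "Dset E T \<pi> s e \<subseteq> X \<Longrightarrow> bmsg E T \<pi> S s e = bmsg E T \<pi> (S \<inter> X) s e"
proof (induction s arbitrary: e X S)
  case 0 then show ?case by simp
next
  case (Suc s)
  have v: "lift_v E e \<in> X" using Suc.prems by simp
  have sub: "\<And>e' e''. e' \<in> lEv E T e \<Longrightarrow> e'' \<in> lEc E T \<pi> e' \<Longrightarrow> Dset E T \<pi> s e'' \<subseteq> X"
    using Suc.prems by auto
  have "\<And>e' e''. e' \<in> lEv E T e \<Longrightarrow> e'' \<in> lEc E T \<pi> e' \<Longrightarrow>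
           bmsg E T \<pi> S s e'' = bmsg E T \<pi> (S \<inter> X) s e''"
    using Suc.IH sub by blast
  then show ?case using v by auto
qed

lemma bmsg_dep: "dep (\<lambda>S. bmsg E T \<pi> S s e) (Dset E T \<pi> s e)"
  unfolding dep_def using bmsg_local by blast

lemma lEv_sub: "lEv E T e \<subseteq> lift_edges E T" by (auto simp: lEv_def)
lemma lEc_sub: "lEc E T \<pi> e \<subseteq> lift_edges E T" by (auto simp: lEc_def)
lemma lift_edges_finite: "finite (lift_edges E T)"
proof -
  have "lift_edges E T = {..<length E} \<times> {..<T}" by (auto simp: lift_edges_def)
  then show ?thesis by simp
qed
lemma lEv_finite: "finite (lEv E T e)" using finite_subset[OF lEv_sub lift_edges_finite] .
lemma lEc_finite: "finite (lEc E T \<pi> e)" using finite_subset[OF lEc_sub lift_edges_finite] .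

lemma lift_v_bits:
  assumes "protograph nV nC E" "e \<in> lift_edges E T"
  shows "lift_v E e \<in> lift_bits nV T"
  using assms by (auto simp: protograph_def lift_edges_def lift_v_def lift_bits_def)

lemma Dset_bits:
  assumes "protograph nV nC E"
  shows "e \<in> lift_edges E T \<Longrightarrow> Dset E T \<pi> s e \<subseteq> lift_bits nV T"
proof (induction s arbitrary: e)
  case 0 then show ?case using lift_v_bits[OF assms] by simp
next
  case (Suc s)
  have "\<And>e' e''. e' \<in> lEv E T e \<Longrightarrow> e'' \<in> lEc E T \<pi> e' \<Longrightarrow> Dset E T \<pi> s e'' \<subseteq> lift_bits nV T"
    using Suc.IH lEc_sub by blast
  then show ?case unfolding Dset.simps using lift_v_bits[OF assms Suc.prems] by blast
qed

lemma Dset_finite: "finite (Dset E T \<pi> s e)"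
  by (induction s arbitrary: e) (auto simp: lEv_finite lEc_finite)

abbreviation "LE E T \<equiv> lift_edges E T"
abbreviation "LN E \<pi> \<equiv> lift_ends E \<pi>"

lemma lift_loopless: "\<forall>e\<in>Ed. fst (lift_ends E \<pi> e) \<noteq> snd (lift_ends E \<pi> e)"
  by (simp add: lift_ends_def)

lemma walk_extend:
  assumes e': "e' \<in> lEv E T e" and e'': "e'' \<in> lEc E T \<pi> e'"
    and w: "walk (LE E T) (LN E \<pi>) k ee ve" and nb: "nbt k ee"
    and v0: "ve 0 = Inl (lift_v E e'')" and f: "0 < k \<longrightarrow> ee 0 \<noteq> e''"
  shows "walk (LE E T) (LN E \<pi>) (Suc (Suc k))
           (\<lambda>j. if j = 0 then e' else if j = 1 then e'' else ee (j - 2))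
           (\<lambda>j. if j = 0 then Inl (lift_v E e) else if j = 1 then Inr (lift_c E \<pi> e') else ve (j - 2))
       \<and> nbt (Suc (Suc k)) (\<lambda>j. if j = 0 then e' else if j = 1 then e'' else ee (j - 2))"
proof
  have e'p: "e' \<in> LE E T" "lift_v E e' = lift_v E e" using e' by (auto simp: lEv_def)
  have e''p: "e'' \<in> LE E T" "lift_c E \<pi> e'' = lift_c E \<pi> e'" "e'' \<noteq> e'" using e'' by (auto simp: lEc_def)
  show "walk (LE E T) (LN E \<pi>) (Suc (Suc k))
           (\<lambda>j. if j = 0 then e' else if j = 1 then e'' else ee (j - 2))
           (\<lambda>j. if j = 0 then Inl (lift_v E e) else if j = 1 then Inr (lift_c E \<pi> e') else ve (j - 2))"
    unfolding walk_def
  proof (intro allI impI)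
    fix j assume j: "j < Suc (Suc k)"
    consider "j = 0" | "j = 1" | "j \<ge> 2" by linarith
    then show "(if j = 0 then e' else if j = 1 then e'' else ee (j - 2)) \<in> LE E T \<and>
         (LN E \<pi> (if j = 0 then e' else if j = 1 then e'' else ee (j - 2)) =
          ((if j = 0 then Inl (lift_v E e) else if j = 1 then Inr (lift_c E \<pi> e') else ve (j - 2)),
           (if Suc j = 0 then Inl (lift_v E e) else if Suc j = 1 then Inr (lift_c E \<pi> e') else ve (Suc j - 2))) \<or>
          LN E \<pi> (if j = 0 then e' else if j = 1 then e'' else ee (j - 2)) =
          ((if Suc j = 0 then Inl (lift_v E e) else if Suc j = 1 then Inr (lift_c E \<pi> e') else ve (Suc j - 2)),
           (if j = 0 then Inl (lift_v E e) else if j = 1 then Inr (lift_c E \<pi> e') else ve (j - 2))))"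
    proof cases
      case 1 then show ?thesis using e'p by (simp add: lift_ends_def)
    next
      case 2 then show ?thesis using e''p v0 by (simp add: lift_ends_def)
    next
      case 3
      then have jk: "j - 2 < k" using j by auto
      have "Suc j - 2 = Suc (j - 2)" using 3 by auto
      then show ?thesis using 3 w jk unfolding walk_def by auto
    qed
  qed
  show "nbt (Suc (Suc k)) (\<lambda>j. if j = 0 then e' else if j = 1 then e'' else ee (j - 2))"
    unfolding nbt_def
  proof (intro allI impI)
    fix j assume j: "Suc j < Suc (Suc k)"
    consider "j = 0" | "j = 1" | "j \<ge> 2" by linarith
    then show "(if j = 0 then e' else if j = 1 then e'' else ee (j - 2)) \<noteq>
               (if Suc j = 0 then e' else if Suc j = 1 then e'' else ee (Suc j - 2))"
    proof cases
      case 1 then show ?thesis using e''p by auto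
    next
      case 2 then show ?thesis using f j by auto
    next
      case 3
      then have "Suc (j - 2) < k" "Suc j - 2 = Suc (j - 2)" using j by auto
      then show ?thesis using 3 nb unfolding nbt_def by auto
    qed
  qed
qed

lemma Dset_walk:
  "e \<in> LE E T \<Longrightarrow> b \<in> Dset E T \<pi> s e \<Longrightarrow>
   \<exists>k ee ve. k \<le> 2 * s \<and> walk (LE E T) (LN E \<pi>) k ee ve \<and> nbt k ee \<and>
      ve 0 = Inl (lift_v E e) \<and> ve k = Inl b \<and> (0 < k \<longrightarrow> ee 0 \<noteq> e)"
proof (induction s arbitrary: e)
  case 0
  then have "b = lift_v E e" by simp
  then show ?case by (intro exI[of _ 0] exI[of _ "\<lambda>_. e"] exI[of _ "\<lambda>_. Inl b"]) (simp add: walk_def nbt_def)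
next
  case (Suc s)
  show ?case
  proof (cases "b = lift_v E e")
    case True
    then show ?thesis by (intro exI[of _ 0] exI[of _ "\<lambda>_. e"] exI[of _ "\<lambda>_. Inl b"]) (simp add: walk_def nbt_def)
  next
    case False
    then obtain e' e'' where e': "e' \<in> lEv E T e" and e'': "e'' \<in> lEc E T \<pi> e'"
      and b: "b \<in> Dset E T \<pi> s e''" using Suc.prems by auto
    have "e'' \<in> LE E T" using e'' lEc_sub by blast
    then obtain k ee ve where k: "k \<le> 2 * s" and w: "walk (LE E T) (LN E \<pi>) k ee ve" and nb: "nbt k ee"
      and v0: "ve 0 = Inl (lift_v E e'')" and vk: "ve k = Inl b" and f: "0 < k \<longrightarrow> ee 0 \<noteq> e''"
      using Suc.IH b by blast
    note X = walk_extend[OF e' e'' w nb v0 f]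
    have ne: "e' \<noteq> e" using e' by (auto simp: lEv_def)
    show ?thesis
      apply (rule exI[of _ "Suc (Suc k)"])
      apply (rule exI[of _ "\<lambda>j. if j = 0 then e' else if j = 1 then e'' else ee (j - 2)"])
      apply (rule exI[of _ "\<lambda>j. if j = 0 then Inl (lift_v E e) else if j = 1 then Inr (lift_c E \<pi> e') else ve (j - 2)"])
      using X k vk ne by auto
  qed
qed

lemma dep_all:
  assumes "\<And>i. i \<in> I \<Longrightarrow> dep (Q i) (D i)"
  shows "dep (\<lambda>S. \<forall>i\<in>I. Q i S) (\<Union>i\<in>I. D i)"
  unfolding dep_def
proof
  fix S
  have "\<And>j. j \<in> I \<Longrightarrow> Q j S = Q j (S \<inter> (\<Union>i\<in>I. D i))"
  proof -
    fix j assume j: "j \<in> I"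
    have "dep (Q j) (D j)" using assms j by simp
    moreover have "D j \<subseteq> (\<Union>i\<in>I. D i)" using j by auto
    ultimately have "dep (Q j) (\<Union>i\<in>I. D i)" by (rule dep_mono)
    then show "Q j S = Q j (S \<inter> (\<Union>i\<in>I. D i))" unfolding dep_def by blast
  qed
  then show "(\<forall>i\<in>I. Q i S) = (\<forall>i\<in>I. Q i (S \<inter> (\<Union>i\<in>I. D i)))" by blast
qed

lemma dep_ex:
  assumes "\<And>i. i \<in> I \<Longrightarrow> dep (Q i) (D i)"
  shows "dep (\<lambda>S. \<exists>i\<in>I. Q i S) (\<Union>i\<in>I. D i)"
proof -
  have "dep (\<lambda>S. \<forall>i\<in>I. \<not> Q i S) (\<Union>i\<in>I. D i)"
  proof (rule dep_all)
    fix i assume "i \<in> I"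
    then have "\<forall>S. Q i S = Q i (S \<inter> D i)" using assms unfolding dep_def by blast
    then show "dep (\<lambda>S. \<not> Q i S) (D i)" unfolding dep_def by blast
  qed
  then show ?thesis unfolding dep_def by blast
qed

lemma lEv_reindex:
  assumes "e \<in> lift_edges E T"
  shows "inj_on fst (lEv E T e) \<and> fst ` lEv E T e = pEv E (fst e)"
proof
  obtain i t where e: "e = (i,t)" "i < length E" "t < T" using assms by (auto simp: lift_edges_def)
  show "inj_on fst (lEv E T e)"
    by (rule inj_onI) (auto simp: lEv_def lift_v_def e)
  show "fst ` lEv E T e = pEv E (fst e)"
  proof
    show "fst ` lEv E T e \<subseteq> pEv E (fst e)"
      by (auto simp: lEv_def pEv_def lift_v_def lift_edges_def e)
    show "pEv E (fst e) \<subseteq> fst ` lEv E T e"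
    proof
      fix j assume j: "j \<in> pEv E (fst e)"
      then have "(j,t) \<in> lEv E T e" using e by (auto simp: lEv_def pEv_def lift_v_def lift_edges_def)
      then show "j \<in> fst ` lEv E T e" by force
    qed
  qed
qed

lemma lEc_reindex:
  assumes vl: "valid_lift E T \<pi>" and "e \<in> lift_edges E T"
  shows "inj_on fst (lEc E T \<pi> e) \<and> fst ` lEc E T \<pi> e = pEc E (fst e)"
proof
  obtain j t where e: "e = (j,t)" "j < length E" "t < T" using assms by (auto simp: lift_edges_def)
  have bij: "\<And>k. k < length E \<Longrightarrow> bij_betw (\<pi> k) {..<T} {..<T}" using vl by (auto simp: valid_lift_def)
  have inj: "\<And>k a b. k < length E \<Longrightarrow> a < T \<Longrightarrow> b < T \<Longrightarrow> \<pi> k a = \<pi> k b \<Longrightarrow> a = b"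
    using bij unfolding bij_betw_def inj_on_def by blast
  have jt: "\<pi> j t < T" using bij[OF e(2)] e(3) unfolding bij_betw_def by auto
  show "inj_on fst (lEc E T \<pi> e)"
  proof (rule inj_onI)
    fix x y assume x: "x \<in> lEc E T \<pi> e" and y: "y \<in> lEc E T \<pi> e" and f: "fst x = fst y"
    obtain k a where xa: "x = (k,a)" by (cases x)
    obtain k' b where yb: "y = (k',b)" by (cases y)
    have "k = k'" using f xa yb by simp
    moreover have "k < length E" "a < T" "b < T" "\<pi> k a = \<pi> j t" "\<pi> k' b = \<pi> j t"
      using x y xa yb e by (auto simp: lEc_def lift_c_def lift_edges_def)
    ultimately have "a = b" using inj by metis
    then show "x = y" using xa yb \<open>k = k'\<close> by simp
  qed
  show "fst ` lEc E T \<pi> e = pEc E (fst e)"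
  proof
    show "fst ` lEc E T \<pi> e \<subseteq> pEc E (fst e)"
    proof
      fix k assume "k \<in> fst ` lEc E T \<pi> e"
      then obtain a where ka: "(k,a) \<in> lEc E T \<pi> e" by force
      then have h: "k < length E" "a < T" "snd (E!k) = snd (E!j)" "\<pi> k a = \<pi> j t" "(k,a) \<noteq> (j,t)"
        using e by (auto simp: lEc_def lift_c_def lift_edges_def)
      have "k \<noteq> j"
      proof
        assume "k = j"
        then have "a = t" using inj[of j a t] h e by simp
        then show False using h \<open>k = j\<close> by simp
      qed
      then show "k \<in> pEc E (fst e)" using h e by (auto simp: pEc_def)
    qed
    show "pEc E (fst e) \<subseteq> fst ` lEc E T \<pi> e"
    proof
      fix k assume k: "k \<in> pEc E (fst e)"
      then have kp: "k < length E" "snd (E!k) = snd (E!j)" "k \<noteq> j" using e by (auto simp: pEc_def)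
      have "\<pi> j t \<in> \<pi> k ` {..<T}" using bij[OF kp(1)] jt unfolding bij_betw_def by auto
      then obtain a where a: "a < T" "\<pi> k a = \<pi> j t" by auto
      have "(k,a) \<in> lEc E T \<pi> e" using a kp e by (auto simp: lEc_def lift_c_def lift_edges_def)
      then show "k \<in> fst ` lEc E T \<pi> e" by force
    qed
  qed
qed

lemma girth_contra:
  assumes "girth Ed ends \<le> enat k" "enat m < girth Ed ends" "k \<le> m"
  shows False
  using assms by (metis enat_ord_simps(1) leD le_less_trans order.trans)

context
  fixes nV nC :: nat and E :: "(nat \<times> nat) list" and T :: nat and \<pi> :: "nat \<Rightarrow> nat \<Rightarrow> nat" and s :: nat
  assumes G: "enat (4 * Suc s) < lift_girth E T \<pi>"
begin

lemma disj_a: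
  assumes e: "e \<in> LE E T" and e': "e' \<in> lEv E T e" and e'': "e'' \<in> lEc E T \<pi> e'"
  shows "lift_v E e \<notin> Dset E T \<pi> s e''"
proof
  assume b: "lift_v E e \<in> Dset E T \<pi> s e''"
  have "e'' \<in> LE E T" using e'' lEc_sub by blast
  then obtain k ee ve where k: "k \<le> 2 * s" and w: "walk (LE E T) (LN E \<pi>) k ee ve" and nb: "nbt k ee"
      and v0: "ve 0 = Inl (lift_v E e'')" and vk: "ve k = Inl (lift_v E e)" and f: "0 < k \<longrightarrow> ee 0 \<noteq> e''"
    using Dset_walk b by blast
  note X = walk_extend[OF e' e'' w nb v0 f]
  have "girth (LE E T) (LN E \<pi>) \<le> enat (Suc (Suc k))"
    by (rule closed_walk_cycle[OF lift_loopless X[THEN conjunct1] X[THEN conjunct2]]) (use vk in auto)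
  moreover have "Suc (Suc k) \<le> 4 * Suc s" using k by simp
  ultimately show False using girth_contra[OF _ G[unfolded lift_girth_def]] by blast
qed

lemma disj_b:
  assumes e: "e \<in> LE E T" and e1': "e1' \<in> lEv E T e" and e1'': "e1'' \<in> lEc E T \<pi> e1'"
    and e2': "e2' \<in> lEv E T e" and e2'': "e2'' \<in> lEc E T \<pi> e2'" and ne: "(e1', e1'') \<noteq> (e2', e2'')"
  shows "Dset E T \<pi> s e1'' \<inter> Dset E T \<pi> s e2'' = {}"
proof (rule ccontr)
  assume "Dset E T \<pi> s e1'' \<inter> Dset E T \<pi> s e2'' \<noteq> {}"
  then obtain b where b1: "b \<in> Dset E T \<pi> s e1''" and b2: "b \<in> Dset E T \<pi> s e2''" by blast
  have "e1'' \<in> LE E T" using e1'' lEc_sub by blast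
  then obtain k1 ee1 ve1 where k1: "k1 \<le> 2 * s" and w1: "walk (LE E T) (LN E \<pi>) k1 ee1 ve1" and nb1: "nbt k1 ee1"
      and v01: "ve1 0 = Inl (lift_v E e1'')" and vk1: "ve1 k1 = Inl b" and f1: "0 < k1 \<longrightarrow> ee1 0 \<noteq> e1''"
    using Dset_walk b1 by blast
  have "e2'' \<in> LE E T" using e2'' lEc_sub by blast
  then obtain k2 ee2 ve2 where k2: "k2 \<le> 2 * s" and w2: "walk (LE E T) (LN E \<pi>) k2 ee2 ve2" and nb2: "nbt k2 ee2"
      and v02: "ve2 0 = Inl (lift_v E e2'')" and vk2: "ve2 k2 = Inl b" and f2: "0 < k2 \<longrightarrow> ee2 0 \<noteq> e2''"
    using Dset_walk b2 by blast
  note X1 = walk_extend[OF e1' e1'' w1 nb1 v01 f1]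
  note X2 = walk_extend[OF e2' e2'' w2 nb2 v02 f2]
  have "\<exists>j0 < 2. (if j0 = 0 then e1' else if j0 = 1 then e1'' else ee1 (j0 - 2)) \<noteq>
                 (if j0 = 0 then e2' else if j0 = 1 then e2'' else ee2 (j0 - 2))"
  proof (cases "e1' = e2'")
    case True then have "e1'' \<noteq> e2''" using ne by auto
    then show ?thesis by (intro exI[of _ 1]) auto
  next
    case False then show ?thesis by (intro exI[of _ 0]) auto
  qed
  then obtain j0 where j0: "j0 < 2" "(if j0 = 0 then e1' else if j0 = 1 then e1'' else ee1 (j0 - 2)) \<noteq>
                 (if j0 = 0 then e2' else if j0 = 1 then e2'' else ee2 (j0 - 2))" by blast
  have "girth (LE E T) (LN E \<pi>) \<le> enat (Suc (Suc k1) + Suc (Suc k2))"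
    by (rule two_walks_cycle[OF lift_loopless X1[THEN conjunct1] X2[THEN conjunct1]
          X1[THEN conjunct2] X2[THEN conjunct2] _ _ _ _ j0(2)]) (use vk1 vk2 j0(1) in auto)
  moreover have "Suc (Suc k1) + Suc (Suc k2) \<le> 4 * Suc s" using k1 k2 by simp
  ultimately show False using girth_contra[OF _ G[unfolded lift_girth_def]] by blast
qed

end

lemma lift_bits_finite: "finite (lift_bits nV T)"
proof -
  have "lift_bits nV T = {..<nV} \<times> {..<T}" by (auto simp: lift_bits_def)
  then show ?thesis by simp
qed

lemma bmsg_prob:
  assumes proto: "protograph nV nC E" and vl: "valid_lift E T \<pi>"
  shows "e \<in> LE E T \<Longrightarrow> enat (4 * s) < lift_girth E T \<pi> \<Longrightarrow>
         mu \<epsilon> (lift_bits nV T) (\<lambda>S. bmsg E T \<pi> S s e) = de_x E \<epsilon> s (fst e)"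
proof (induction s arbitrary: e)
  case 0
  then show ?case using mu_single[OF lift_bits_finite lift_v_bits[OF proto]] by simp
next
  case (Suc s)
  let ?B = "lift_bits nV T"
  have fB: "finite ?B" by (rule lift_bits_finite)
  note G = Suc.prems(2)
  have Gs: "enat (4 * s) < lift_girth E T \<pi>" using G by (meson enat_ord_simps(2) le_less_trans less_imp_le_nat linorder_not_less mult_le_mono2 not_less_eq_eq)
  have e: "e \<in> LE E T" by (rule Suc.prems(1))
  define R where "R = (\<lambda>e' S. \<exists>e''\<in>lEc E T \<pi> e'. bmsg E T \<pi> S s e'')"
  define U where "U = (\<lambda>e'. \<Union>e''\<in>lEc E T \<pi> e'. Dset E T \<pi> s e'')"
  have edge_in: "\<And>e' e''. e'' \<in> lEc E T \<pi> e' \<Longrightarrow> e'' \<in> LE E T" using lEc_sub by blast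
  have dR: "\<And>e'. dep (R e') (U e')"
    unfolding R_def U_def by (rule dep_ex) (rule bmsg_dep)
  have UB: "\<And>e'. U e' \<subseteq> ?B" unfolding U_def using Dset_bits[OF proto] edge_in by blast
  have b1: "(\<lambda>S. bmsg E T \<pi> S (Suc s) e) = (\<lambda>S. lift_v E e \<in> S \<and> (\<forall>e'\<in>lEv E T e. R e' S))"
    unfolding R_def by simp
  have "mu \<epsilon> ?B (\<lambda>S. lift_v E e \<in> S \<and> (\<forall>e'\<in>lEv E T e. R e' S)) =
        mu \<epsilon> ?B (\<lambda>S. lift_v E e \<in> S) * mu \<epsilon> ?B (\<lambda>S. \<forall>e'\<in>lEv E T e. R e' S)"
  proof (rule mu_indep2[OF fB, of "{lift_v E e}" "\<Union>e'\<in>lEv E T e. U e'"])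
    show "{lift_v E e} \<subseteq> ?B" using lift_v_bits[OF proto e] by simp
    show "(\<Union>e'\<in>lEv E T e. U e') \<subseteq> ?B" using UB by blast
    show "{lift_v E e} \<inter> (\<Union>e'\<in>lEv E T e. U e') = {}"
      unfolding U_def using disj_a[OF G e] by blast
    show "dep (\<lambda>S. lift_v E e \<in> S) {lift_v E e}" unfolding dep_def by auto
    show "dep (\<lambda>S. \<forall>e'\<in>lEv E T e. R e' S) (\<Union>e'\<in>lEv E T e. U e')"
      by (rule dep_all) (rule dR)
  qed
  also have "mu \<epsilon> ?B (\<lambda>S. lift_v E e \<in> S) = \<epsilon>"
    using mu_single[OF fB lift_v_bits[OF proto e]] .
  also have "mu \<epsilon> ?B (\<lambda>S. \<forall>e'\<in>lEv E T e. R e' S) = (\<Prod>e'\<in>lEv E T e. mu \<epsilon> ?B (R e'))"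
  proof (rule mu_all[OF fB lEv_finite])
    show "\<And>i. i \<in> lEv E T e \<Longrightarrow> U i \<subseteq> ?B" using UB by blast
    show "\<And>i. i \<in> lEv E T e \<Longrightarrow> dep (R i) (U i)" by (rule dR)
    show "\<And>i j. i \<in> lEv E T e \<Longrightarrow> j \<in> lEv E T e \<Longrightarrow> i \<noteq> j \<Longrightarrow> U i \<inter> U j = {}"
    proof -
      fix i j assume i: "i \<in> lEv E T e" and j: "j \<in> lEv E T e" and ij: "i \<noteq> j"
      have "\<And>x y. x \<in> lEc E T \<pi> i \<Longrightarrow> y \<in> lEc E T \<pi> j \<Longrightarrow> Dset E T \<pi> s x \<inter> Dset E T \<pi> s y = {}"
        using disj_b[OF G e i _ j _] ij by blast
      then show "U i \<inter> U j = {}" unfolding U_def by blast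
    qed
  qed
  also have "\<dots> = (\<Prod>e'\<in>lEv E T e. 1 - (\<Prod>k\<in>pEc E (fst e'). 1 - de_x E \<epsilon> s k))"
  proof (rule prod.cong[OF refl])
    fix e' assume e': "e' \<in> lEv E T e"
    have e'E: "e' \<in> LE E T" using e' lEv_sub by blast
    have "mu \<epsilon> ?B (R e') = 1 - (\<Prod>e''\<in>lEc E T \<pi> e'. 1 - mu \<epsilon> ?B (\<lambda>S. bmsg E T \<pi> S s e''))"
      unfolding R_def
    proof (rule mu_ex[OF fB lEc_finite])
      show "\<And>i. i \<in> lEc E T \<pi> e' \<Longrightarrow> Dset E T \<pi> s i \<subseteq> ?B" using Dset_bits[OF proto] edge_in by blast
      show "\<And>i. i \<in> lEc E T \<pi> e' \<Longrightarrow> dep (\<lambda>S. bmsg E T \<pi> S s i) (Dset E T \<pi> s i)" by (rule bmsg_dep)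
      show "\<And>i j. i \<in> lEc E T \<pi> e' \<Longrightarrow> j \<in> lEc E T \<pi> e' \<Longrightarrow> i \<noteq> j \<Longrightarrow> Dset E T \<pi> s i \<inter> Dset E T \<pi> s j = {}"
        using disj_b[OF G e e' _ e'] by blast
    qed
    also have "\<dots> = 1 - (\<Prod>e''\<in>lEc E T \<pi> e'. 1 - de_x E \<epsilon> s (fst e''))"
      using Suc.IH[OF _ Gs] edge_in by simp
    also have "(\<Prod>e''\<in>lEc E T \<pi> e'. 1 - de_x E \<epsilon> s (fst e'')) = (\<Prod>k\<in>pEc E (fst e'). 1 - de_x E \<epsilon> s k)"
    proof -
      have ri: "inj_on fst (lEc E T \<pi> e')" "fst ` lEc E T \<pi> e' = pEc E (fst e')"
        using lEc_reindex[OF vl e'E] by auto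
      show ?thesis using prod.reindex[OF ri(1), of "\<lambda>k. 1 - de_x E \<epsilon> s k"] ri(2) by (simp add: comp_def)
    qed
    finally show "mu \<epsilon> ?B (R e') = 1 - (\<Prod>k\<in>pEc E (fst e'). 1 - de_x E \<epsilon> s k)" .
  qed
  also have "\<dots> = (\<Prod>j\<in>pEv E (fst e). 1 - (\<Prod>k\<in>pEc E j. 1 - de_x E \<epsilon> s k))"
  proof -
    have ri: "inj_on fst (lEv E T e)" "fst ` lEv E T e = pEv E (fst e)"
      using lEv_reindex[OF e] by auto
    show ?thesis using prod.reindex[OF ri(1), of "\<lambda>j. 1 - (\<Prod>k\<in>pEc E j. 1 - de_x E \<epsilon> s k)"] ri(2)
      by (simp add: comp_def)
  qed
  finally show ?case unfolding b1 by simp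
qed

lemma vdeg_edge:
  assumes "vdeg E v \<ge> 1"
  shows "\<exists>i<length E. fst (E!i) = v"
proof -
  have "filter (\<lambda>e. fst e = v) E \<noteq> []" using assms by (auto simp: vdeg_def)
  then obtain x where "x \<in> set E" "fst x = v" by (auto simp: filter_empty_conv)
  then show ?thesis by (metis in_set_conv_nth)
qed

lemma bit_erased_bmsg:
  assumes "lift_v E eb = b" "eb \<in> LE E T" "bit_erased E T \<pi> S t b"
  shows "bmsg E T \<pi> S t eb"
proof (cases t)
  case 0 then show ?thesis using assms by (simp add: bit_erased_def)
next
  case (Suc s)
  have "\<And>e'. e' \<in> lEv E T eb \<Longrightarrow> cmsg E T \<pi> S s e'"
    using assms Suc by (auto simp: bit_erased_def lEv_def)
  then show ?thesis using assms Suc by (auto simp: bit_erased_def cmsg_def)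
qed

lemma block_prob_bound:
  assumes proto: "protograph nV nC E" and vl: "valid_lift E T \<pi>"
    and deg: "\<forall>v<nV. vdeg E v \<ge> 2" and eps: "0 \<le> \<epsilon>" "\<epsilon> \<le> 1"
    and G: "enat (4 * t) < lift_girth E T \<pi>"
  shows "block_erasure_prob nV E T \<pi> \<epsilon> t \<le> real (T * nV) * Max (de_x E \<epsilon> t ` {..<length E})"
proof -
  let ?B = "lift_bits nV T"
  let ?M = "Max (de_x E \<epsilon> t ` {..<length E})"
  have "block_erasure_prob nV E T \<pi> \<epsilon> t = mu \<epsilon> ?B (\<lambda>S. \<exists>b\<in>?B. bit_erased E T \<pi> S t b)"
    unfolding block_erasure_prob_def mu_def wt_def by simp
  also have "\<dots> \<le> (\<Sum>b\<in>?B. mu \<epsilon> ?B (\<lambda>S. bit_erased E T \<pi> S t b))"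
    by (rule mu_union[OF eps lift_bits_finite])
  also have "\<dots> \<le> (\<Sum>b\<in>?B. ?M)"
  proof (rule sum_mono)
    fix b assume b: "b \<in> ?B"
    obtain v \<tau> where bv: "b = (v, \<tau>)" "v < nV" "\<tau> < T" using b by (auto simp: lift_bits_def)
    obtain i where i: "i < length E" "fst (E!i) = v" using vdeg_edge deg bv by (metis one_le_numeral order_trans)
    let ?eb = "(i, \<tau>)"
    have ebE: "?eb \<in> LE E T" using i bv by (auto simp: lift_edges_def)
    have lv: "lift_v E ?eb = b" using i bv by (simp add: lift_v_def)
    have "mu \<epsilon> ?B (\<lambda>S. bit_erased E T \<pi> S t b) \<le> mu \<epsilon> ?B (\<lambda>S. bmsg E T \<pi> S t ?eb)"
      by (rule mu_mono[OF eps]) (use bit_erased_bmsg[OF lv ebE] in blast)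
    also have "\<dots> = de_x E \<epsilon> t i" using bmsg_prob[OF proto vl ebE G] by simp
    also have "\<dots> \<le> ?M" using i by (intro Max_ge) auto
    finally show "mu \<epsilon> ?B (\<lambda>S. bit_erased E T \<pi> S t b) \<le> ?M" .
  qed
  also have "\<dots> = real (card ?B) * ?M" by simp
  also have "card ?B = T * nV"
  proof -
    have "?B = {..<nV} \<times> {..<T}" by (auto simp: lift_bits_def)
    then show ?thesis by (simp add: card_cartesian_product)
  qed
  finally show ?thesis .
qed

lemma prod_01:
  assumes "\<And>x. x \<in> A \<Longrightarrow> 0 \<le> f x \<and> f x \<le> (1::real)"
  shows "0 \<le> prod f A \<and> prod f A \<le> 1"
  using assms by (simp add: prod_nonneg prod_le_1)

lemma de_x_01:
  assumes "0 \<le> \<epsilon>" "\<epsilon> \<le> 1"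
  shows "0 \<le> de_x E \<epsilon> t i \<and> de_x E \<epsilon> t i \<le> \<epsilon>"
proof (induction t arbitrary: i)
  case 0 then show ?case using assms by simp
next
  case (Suc t)
  have inner: "\<And>j. 0 \<le> (\<Prod>k\<in>pEc E j. 1 - de_x E \<epsilon> t k) \<and> (\<Prod>k\<in>pEc E j. 1 - de_x E \<epsilon> t k) \<le> 1"
  proof (rule prod_01)
    fix k show "0 \<le> 1 - de_x E \<epsilon> t k \<and> 1 - de_x E \<epsilon> t k \<le> 1" using Suc.IH[of k] assms by auto
  qed
  have outer: "0 \<le> (\<Prod>j\<in>pEv E i. 1 - (\<Prod>k\<in>pEc E j. 1 - de_x E \<epsilon> t k)) \<and>
               (\<Prod>j\<in>pEv E i. 1 - (\<Prod>k\<in>pEc E j. 1 - de_x E \<epsilon> t k)) \<le> 1"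
    by (rule prod_01) (use inner in force)
  show ?case using outer assms mult_left_le[of "\<Prod>j\<in>pEv E i. 1 - (\<Prod>k\<in>pEc E j. 1 - de_x E \<epsilon> t k)" \<epsilon>]
    by (simp add: mult_nonneg_nonneg)
qed

lemma step_mono:
  assumes "0 \<le> a" "a \<le> b" "b \<le> (1::real)"
    and x: "\<And>k. 0 \<le> x k \<and> x k \<le> x' k \<and> x' k \<le> 1"
  shows "a * (\<Prod>j\<in>P. 1 - (\<Prod>k\<in>Q j. 1 - x k)) \<le> b * (\<Prod>j\<in>P. 1 - (\<Prod>k\<in>Q j. 1 - x' k))"
proof -
  have i1: "\<And>j. (\<Prod>k\<in>Q j. 1 - x' k) \<le> (\<Prod>k\<in>Q j. 1 - x k)"
    by (rule prod_mono) (use x in force)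
  have i2: "\<And>j. 0 \<le> (\<Prod>k\<in>Q j. 1 - x' k) \<and> (\<Prod>k\<in>Q j. 1 - x' k) \<le> 1"
  proof (rule prod_01)
    fix k show "0 \<le> 1 - x' k \<and> 1 - x' k \<le> 1" using x[of k] by auto
  qed
  have i3: "\<And>j. 0 \<le> (\<Prod>k\<in>Q j. 1 - x k) \<and> (\<Prod>k\<in>Q j. 1 - x k) \<le> 1"
  proof (rule prod_01)
    fix k show "0 \<le> 1 - x k \<and> 1 - x k \<le> 1" using x[of k] by auto
  qed
  have o1: "(\<Prod>j\<in>P. 1 - (\<Prod>k\<in>Q j. 1 - x k)) \<le> (\<Prod>j\<in>P. 1 - (\<Prod>k\<in>Q j. 1 - x' k))"
    by (rule prod_mono) (use i1 i3 in force)
  have o0: "0 \<le> (\<Prod>j\<in>P. 1 - (\<Prod>k\<in>Q j. 1 - x k))"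
    by (rule prod_nonneg) (use i3 in force)
  have o2: "(\<Prod>j\<in>P. 1 - (\<Prod>k\<in>Q j. 1 - x' k)) \<le> 1"
    using prod_01[of P "\<lambda>j. 1 - (\<Prod>k\<in>Q j. 1 - x' k)"] i2 by force
  show ?thesis using assms o0 o1 by (meson mult_mono order.trans o0)
qed

lemma de_x_mono_t:
  assumes "0 \<le> \<epsilon>" "\<epsilon> \<le> 1"
  shows "de_x E \<epsilon> (Suc t) i \<le> de_x E \<epsilon> t i"
proof (induction t arbitrary: i)
  case 0 then show ?case using de_x_01[OF assms, of E 1 i] by simp
next
  case (Suc t)
  have xx: "\<And>k. 0 \<le> de_x E \<epsilon> (Suc t) k \<and> de_x E \<epsilon> (Suc t) k \<le> de_x E \<epsilon> t k \<and> de_x E \<epsilon> t k \<le> 1"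
  proof -
    fix k
    have "de_x E \<epsilon> (Suc t) k \<le> de_x E \<epsilon> t k" by (rule Suc.IH)
    moreover have "0 \<le> de_x E \<epsilon> (Suc t) k" "de_x E \<epsilon> t k \<le> \<epsilon>" using de_x_01[OF assms] by blast+
    ultimately show "0 \<le> de_x E \<epsilon> (Suc t) k \<and> de_x E \<epsilon> (Suc t) k \<le> de_x E \<epsilon> t k \<and> de_x E \<epsilon> t k \<le> 1"
      using assms by linarith
  qed
  have "de_x E \<epsilon> (Suc (Suc t)) i = \<epsilon> * (\<Prod>j\<in>pEv E i. 1 - (\<Prod>k\<in>pEc E j. 1 - de_x E \<epsilon> (Suc t) k))" by simp
  also have "\<dots> \<le> \<epsilon> * (\<Prod>j\<in>pEv E i. 1 - (\<Prod>k\<in>pEc E j. 1 - de_x E \<epsilon> t k))"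
    by (rule step_mono[OF assms(1) order.refl assms(2) xx])
  also have "\<dots> = de_x E \<epsilon> (Suc t) i" by simp
  finally show ?case .
qed

lemma de_x_mono_t': 
  assumes "0 \<le> \<epsilon>" "\<epsilon> \<le> 1" "t \<le> s"
  shows "de_x E \<epsilon> s i \<le> de_x E \<epsilon> t i"
  using assms(3)
proof (induction s rule: dec_induct)
  case base then show ?case by simp
next
  case (step s) then show ?case using de_x_mono_t[OF assms(1,2), of E s i] by linarith
qed

lemma de_x_mono_eps:
  assumes "0 \<le> \<epsilon>" "\<epsilon> \<le> \<epsilon>'" "\<epsilon>' \<le> 1"
  shows "de_x E \<epsilon> t i \<le> de_x E \<epsilon>' t i"
proof (induction t arbitrary: i)
  case 0 then show ?case using assms by simp
next
  case (Suc t)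
  have xx: "\<And>k. 0 \<le> de_x E \<epsilon> t k \<and> de_x E \<epsilon> t k \<le> de_x E \<epsilon>' t k \<and> de_x E \<epsilon>' t k \<le> 1"
  proof -
    fix k
    have "de_x E \<epsilon> t k \<le> de_x E \<epsilon>' t k" by (rule Suc.IH)
    moreover have "0 \<le> de_x E \<epsilon> t k" using de_x_01[of \<epsilon> E] assms by force
    moreover have "de_x E \<epsilon>' t k \<le> \<epsilon>'" using de_x_01[of \<epsilon>' E] assms by force
    ultimately show "0 \<le> de_x E \<epsilon> t k \<and> de_x E \<epsilon> t k \<le> de_x E \<epsilon>' t k \<and> de_x E \<epsilon>' t k \<le> 1"
      using assms by linarith
  qed
  show ?case
    by (simp only: de_x.simps, rule step_mono[OF assms(1,2,3) xx])
qed

definition mx :: "(nat \<times> nat) list \<Rightarrow> real \<Rightarrow> nat \<Rightarrow> real" where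
  "mx E \<epsilon> t = Max (de_x E \<epsilon> t ` {..<length E})"

lemma mx_ge: "i < length E \<Longrightarrow> de_x E \<epsilon> t i \<le> mx E \<epsilon> t"
  unfolding mx_def by (intro Max_ge) auto

lemma mx_obtain: "E \<noteq> [] \<Longrightarrow> \<exists>i<length E. mx E \<epsilon> t = de_x E \<epsilon> t i"
proof -
  assume "E \<noteq> []"
  then have "de_x E \<epsilon> t ` {..<length E} \<noteq> {}" by auto
  then have "mx E \<epsilon> t \<in> de_x E \<epsilon> t ` {..<length E}" unfolding mx_def by (intro Max_in) auto
  then show ?thesis by auto
qed

lemma mx_nonneg: "E \<noteq> [] \<Longrightarrow> 0 \<le> \<epsilon> \<Longrightarrow> \<epsilon> \<le> 1 \<Longrightarrow> 0 \<le> mx E \<epsilon> t"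
  using mx_ge[of 0 E \<epsilon> t] de_x_01[of \<epsilon> E t 0] by force

lemma mx_mono:
  assumes "E \<noteq> []" "0 \<le> \<epsilon>" "\<epsilon> \<le> 1" "t \<le> s"
  shows "mx E \<epsilon> s \<le> mx E \<epsilon> t"
proof -
  obtain i where i: "i < length E" "mx E \<epsilon> s = de_x E \<epsilon> s i" using mx_obtain[OF assms(1)] by blast
  then show ?thesis using de_x_mono_t'[OF assms(2,3,4)] mx_ge[OF i(1)] by (metis order.trans)
qed

lemma de_x_zero: "de_x E 0 t i = 0"
  by (cases t) auto

lemma threshold_conv:
  assumes E: "E \<noteq> []" and eps: "0 \<le> \<epsilon>" "\<epsilon> < de_threshold E"
  shows "\<epsilon> \<le> 1" "(\<lambda>t. mx E \<epsilon> t) \<longlonglongrightarrow> 0"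
proof -
  let ?S = "{\<epsilon> \<in> {0..1}. (\<lambda>t. Max (de_x E \<epsilon> t ` {..<length E})) \<longlonglongrightarrow> 0}"
  have z: "0 \<in> ?S"
  proof -
    have "\<And>t. Max (de_x E 0 t ` {..<length E}) = 0"
    proof -
      fix t
      have "de_x E 0 t ` {..<length E} = {0}" using E by (auto simp: de_x_zero)
      then show "Max (de_x E 0 t ` {..<length E}) = 0" by simp
    qed
    then show ?thesis by simp
  qed
  have ne: "?S \<noteq> {}" using z by blast
  have bdd: "bdd_above ?S" by (rule bdd_aboveI[of _ 1]) auto
  have "\<exists>x\<in>?S. \<epsilon> < x" using eps(2) unfolding de_threshold_def using less_cSup_iff[OF ne bdd] by blast
  then obtain e' where e': "e' \<in> ?S" "\<epsilon> < e'" by blast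
  then show "\<epsilon> \<le> 1" by auto
  have lim: "(\<lambda>t. mx E e' t) \<longlonglongrightarrow> 0" using e' unfolding mx_def by auto
  show "(\<lambda>t. mx E \<epsilon> t) \<longlonglongrightarrow> 0"
  proof (rule tendsto_sandwich[OF _ _ tendsto_const lim])
    show "\<forall>\<^sub>F t in sequentially. 0 \<le> mx E \<epsilon> t" using mx_nonneg[OF E eps(1)] e' by auto
    show "\<forall>\<^sub>F t in sequentially. mx E \<epsilon> t \<le> mx E e' t"
    proof (intro always_eventually allI)
      fix t
      obtain i where i: "i < length E" "mx E \<epsilon> t = de_x E \<epsilon> t i" using mx_obtain[OF E] by blast
      have "de_x E \<epsilon> t i \<le> de_x E e' t i" using de_x_mono_eps[OF eps(1), of e'] e' by auto
      then show "mx E \<epsilon> t \<le> mx E e' t" using i mx_ge[OF i(1), of e' t] by linarith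
    qed
  qed
qed

lemma one_minus_prod_le_sum:
  assumes "finite A" "\<And>k. k \<in> A \<Longrightarrow> 0 \<le> x k \<and> x k \<le> (1::real)"
  shows "1 - (\<Prod>k\<in>A. 1 - x k) \<le> (\<Sum>k\<in>A. x k)"
  using assms
proof (induction A rule: finite_induct)
  case empty then show ?case by simp
next
  case (insert a A)
  have P: "0 \<le> (\<Prod>k\<in>A. 1 - x k) \<and> (\<Prod>k\<in>A. 1 - x k) \<le> 1"
  proof (rule prod_01)
    fix k assume "k \<in> A" then show "0 \<le> 1 - x k \<and> 1 - x k \<le> 1" using insert.prems[of k] by auto
  qed
  have IH: "1 - (\<Prod>k\<in>A. 1 - x k) \<le> (\<Sum>k\<in>A. x k)" using insert by auto
  have xa: "0 \<le> x a" "x a \<le> 1" using insert.prems[of a] by auto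
  have "1 - (\<Prod>k\<in>insert a A. 1 - x k) = 1 - (1 - x a) * (\<Prod>k\<in>A. 1 - x k)" using insert by simp
  also have "\<dots> \<le> x a + (1 - (\<Prod>k\<in>A. 1 - x k))" using P xa by (simp add: algebra_simps mult_left_le)
  also have "\<dots> \<le> x a + (\<Sum>k\<in>A. x k)" using IH by simp
  also have "\<dots> = (\<Sum>k\<in>insert a A. x k)" using insert by simp
  finally show ?case .
qed

lemma prod_le_two:
  assumes "finite A" "j1 \<in> A" "j2 \<in> A" "j1 \<noteq> j2" "\<And>j. j \<in> A \<Longrightarrow> 0 \<le> f j \<and> f j \<le> (1::real)"
  shows "prod f A \<le> f j1 * f j2"
proof -
  have A: "A = insert j1 (insert j2 (A - {j1, j2}))" using assms by auto
  have R: "0 \<le> prod f (A - {j1, j2}) \<and> prod f (A - {j1, j2}) \<le> 1"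
    by (rule prod_01) (use assms(5) in auto)
  have "prod f A = f j1 * f j2 * prod f (A - {j1, j2})"
    using assms by (subst A) (simp add: algebra_simps)
  also have "\<dots> \<le> f j1 * f j2"
    using R assms(5)[OF assms(2)] assms(5)[OF assms(3)] by (simp add: mult_left_le mult_nonneg_nonneg)
  finally show ?thesis .
qed

lemma pEv_finite: "finite (pEv E i)" by (rule finite_subset[of _ "{..<length E}"]) (auto simp: pEv_def)
lemma pEc_finite: "finite (pEc E i)" by (rule finite_subset[of _ "{..<length E}"]) (auto simp: pEc_def)

lemma card_pEv:
  assumes "i < length E"
  shows "card (pEv E i) = vdeg E (fst (E!i)) - 1"
proof -
  have "vdeg E (fst (E!i)) = card {j. j < length E \<and> fst (E!j) = fst (E!i)}"
    unfolding vdeg_def by (rule length_filter_conv_card)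
  moreover have "pEv E i = {j. j < length E \<and> fst (E!j) = fst (E!i)} - {i}" by (auto simp: pEv_def)
  moreover have "i \<in> {j. j < length E \<and> fst (E!j) = fst (E!i)}" using assms by simp
  ultimately show ?thesis by (simp add: card_Diff_singleton)
qed

definition Rel :: "(nat \<times> nat) list \<Rightarrow> (nat \<times> nat) set" where
  "Rel E = {(k,i). i < length E \<and> vdeg E (fst (E!i)) = 2 \<and> (\<exists>j\<in>pEv E i. k \<in> pEc E j)}"

lemma proto_loopless: "\<forall>e\<in>Ed. fst (proto_ends E e) \<noteq> snd (proto_ends E e)"
  by (simp add: proto_ends_def)

lemma wf_Rel:
  assumes acyc: "deg2_acyclic E"
  shows "wf (Rel E)"
proof -
  have "\<nexists>f. \<forall>m. (f (Suc m), f m) \<in> Rel E"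
  proof
    assume "\<exists>f. \<forall>m. (f (Suc m), f m) \<in> Rel E"
    then obtain f where f: "\<And>m. (f (Suc m), f m) \<in> Rel E" by blast
    have "\<forall>m. \<exists>j. j \<in> pEv E (f m) \<and> f (Suc m) \<in> pEc E j" using f unfolding Rel_def by blast
    then obtain g where g: "\<And>m. g m \<in> pEv E (f m) \<and> f (Suc m) \<in> pEc E (g m)" by metis
    have fn: "\<And>m. f m < length E \<and> vdeg E (fst (E!(f m))) = 2" using f unfolding Rel_def by blast
    have gp: "\<And>m. g m < length E \<and> fst (E!(g m)) = fst (E!(f m)) \<and> g m \<noteq> f m" using g unfolding pEv_def by blast
    have fp: "\<And>m. snd (E!(f (Suc m))) = snd (E!(g m)) \<and> f (Suc m) \<noteq> g m" using g unfolding pEc_def by blast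
    have "\<not> inj f"
    proof
      assume "inj f"
      then have "finite (UNIV :: nat set)"
        using inj_on_finite[of f UNIV "{..<length E}"] fn by auto
      then show False by simp
    qed
    then obtain a b where ab: "f a = f b" "a < b" unfolding inj_def by (metis linorder_neqE_nat)
    define Ed where "Ed = {i. i < length E \<and> vdeg E (fst (E!i)) = 2}"
    define ve where "ve = (\<lambda>p::nat. if even p then (Inr (snd (E ! f (a + p div 2))) :: nat + nat)
                                     else Inl (fst (E ! f (a + p div 2))))"
    define ee where "ee = (\<lambda>p::nat. if even p then f (a + p div 2) else g (a + p div 2))"
    define k where "k = 2 * (b - a)"
    have "walk Ed (proto_ends E) k ee ve"
      unfolding walk_def
    proof (intro allI impI)
      fix p assume "p < k"
      show "ee p \<in> Ed \<and> (proto_ends E (ee p) = (ve p, ve (Suc p)) \<or> proto_ends E (ee p) = (ve (Suc p), ve p))"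
      proof (cases "even p")
        case True
        then have s: "Suc p div 2 = p div 2" "odd (Suc p)" by auto
        show ?thesis using True s fn[of "a + p div 2"]
          by (simp add: ee_def ve_def Ed_def proto_ends_def)
      next
        case False
        then have s: "Suc p div 2 = Suc (p div 2)" "even (Suc p)" by (auto elim: oddE)
        show ?thesis using False s fn[of "a + p div 2"] gp[of "a + p div 2"] fp[of "a + p div 2"]
          by (simp add: ee_def ve_def Ed_def proto_ends_def)
      qed
    qed
    moreover have "nbt k ee"
      unfolding nbt_def
    proof (intro allI impI)
      fix p assume "Suc p < k"
      show "ee p \<noteq> ee (Suc p)"
      proof (cases "even p")
        case True
        then have s: "Suc p div 2 = p div 2" "odd (Suc p)" by auto
        show ?thesis using True s gp[of "a + p div 2"] by (simp add: ee_def)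
      next
        case False
        then have s: "Suc p div 2 = Suc (p div 2)" "even (Suc p)" by (auto elim: oddE)
        show ?thesis using False s fp[of "a + p div 2"] by (simp add: ee_def)
      qed
    qed
    moreover have "ve k = ve 0" using ab by (simp add: ve_def k_def)
    moreover have "k \<ge> 1" using ab by (simp add: k_def)
    ultimately have gle: "girth Ed (proto_ends E) \<le> enat k"
      using closed_walk_cycle[OF proto_loopless] by blast
    have "girth Ed (proto_ends E) = top"
      using acyc unfolding deg2_acyclic_def girth_def Ed_def by simp
    then show False using gle by (simp add: top_enat_def)
  qed
  then show ?thesis by (simp add: wf_iff_no_infinite_down_chain)
qed

context
  fixes nV nC :: nat and E :: "(nat \<times> nat) list" and \<epsilon> :: real
  assumes proto: "protograph nV nC E" and deg: "\<forall>v<nV. vdeg E v \<ge> 2"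
    and acyc: "deg2_acyclic E" and eps: "0 \<le> \<epsilon>" "\<epsilon> \<le> 1" and ne: "E \<noteq> []"
begin

lemma vdeg_i: "i < length E \<Longrightarrow> vdeg E (fst (E!i)) \<ge> 2"
  using proto deg unfolding protograph_def by (meson nth_mem)

lemma Y_bounds:
  "0 \<le> 1 - (\<Prod>k\<in>pEc E j. 1 - de_x E \<epsilon> t k) \<and> 1 - (\<Prod>k\<in>pEc E j. 1 - de_x E \<epsilon> t k) \<le> 1 \<and>
   1 - (\<Prod>k\<in>pEc E j. 1 - de_x E \<epsilon> t k) \<le> (\<Sum>k\<in>pEc E j. de_x E \<epsilon> t k) \<and>
   (\<Sum>k\<in>pEc E j. de_x E \<epsilon> t k) \<le> real (length E) * mx E \<epsilon> t"
proof -
  have x01: "\<And>k. 0 \<le> de_x E \<epsilon> t k \<and> de_x E \<epsilon> t k \<le> 1"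
  proof -
    fix k show "0 \<le> de_x E \<epsilon> t k \<and> de_x E \<epsilon> t k \<le> 1" using de_x_01[OF eps, of E t k] eps(2) by linarith
  qed
  have P: "0 \<le> (\<Prod>k\<in>pEc E j. 1 - de_x E \<epsilon> t k) \<and> (\<Prod>k\<in>pEc E j. 1 - de_x E \<epsilon> t k) \<le> 1"
  proof (rule prod_01)
    fix k show "0 \<le> 1 - de_x E \<epsilon> t k \<and> 1 - de_x E \<epsilon> t k \<le> 1" using x01[of k] by auto
  qed
  have S: "1 - (\<Prod>k\<in>pEc E j. 1 - de_x E \<epsilon> t k) \<le> (\<Sum>k\<in>pEc E j. de_x E \<epsilon> t k)"
    by (rule one_minus_prod_le_sum[OF pEc_finite]) (use x01 in auto)
  have "(\<Sum>k\<in>pEc E j. de_x E \<epsilon> t k) \<le> (\<Sum>k\<in>pEc E j. mx E \<epsilon> t)"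
    by (rule sum_mono) (auto simp: pEc_def intro: mx_ge)
  also have "\<dots> = real (card (pEc E j)) * mx E \<epsilon> t" by simp
  also have "\<dots> \<le> real (length E) * mx E \<epsilon> t"
  proof (rule mult_right_mono)
    have "card (pEc E j) \<le> card {..<length E}" by (rule card_mono) (auto simp: pEc_def)
    then show "real (card (pEc E j)) \<le> real (length E)" by simp
    show "0 \<le> mx E \<epsilon> t" by (rule mx_nonneg[OF ne eps])
  qed
  finally show ?thesis using P S by simp
qed

lemma deg3_bound:
  assumes i: "i < length E" and d: "vdeg E (fst (E!i)) \<ge> 3"
  shows "de_x E \<epsilon> (Suc s) i \<le> (real (length E) * mx E \<epsilon> s)^2"
proof -
  have "card (pEv E i) \<ge> 2" using card_pEv[OF i] d by simp
  then have "pEv E i \<noteq> {}" by auto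
  then obtain j1 where j1: "j1 \<in> pEv E i" by blast
  have "card (pEv E i - {j1}) \<ge> 1" using \<open>card (pEv E i) \<ge> 2\<close> j1 pEv_finite by (simp add: card_Diff_singleton)
  then have "pEv E i - {j1} \<noteq> {}" by (metis card.empty not_one_le_zero)
  then obtain j2 where "j2 \<in> pEv E i - {j1}" by blast
  then have j: "j1 \<in> pEv E i" "j2 \<in> pEv E i" "j1 \<noteq> j2" using j1 by auto
  let ?Y = "\<lambda>j. 1 - (\<Prod>k\<in>pEc E j. 1 - de_x E \<epsilon> s k)"
  have Y: "\<And>j. 0 \<le> ?Y j \<and> ?Y j \<le> 1 \<and> ?Y j \<le> real (length E) * mx E \<epsilon> s"
    using Y_bounds by (meson order.trans)
  have "de_x E \<epsilon> (Suc s) i = \<epsilon> * prod ?Y (pEv E i)" by simp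
  also have "\<dots> \<le> prod ?Y (pEv E i)"
    using eps prod_01[of "pEv E i" ?Y] Y by (simp add: mult_left_le_one_le)
  also have "\<dots> \<le> ?Y j1 * ?Y j2" by (rule prod_le_two[OF pEv_finite j]) (use Y in auto)
  also have "\<dots> \<le> (real (length E) * mx E \<epsilon> s) * (real (length E) * mx E \<epsilon> s)"
    using Y[of j1] Y[of j2] by (meson mult_mono order.trans)
  finally show ?thesis by (simp add: power2_eq_square)
qed

lemma deg2_bound:
  assumes i: "i < length E" and d: "vdeg E (fst (E!i)) = 2"
  obtains j where "pEv E i = {j}" "\<And>s. de_x E \<epsilon> (Suc s) i \<le> (\<Sum>k\<in>pEc E j. de_x E \<epsilon> s k)"
proof -
  have "card (pEv E i) = 1" using card_pEv[OF i] d by simp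
  then obtain j where j: "pEv E i = {j}" by (rule card_1_singletonE)
  have "\<And>s. de_x E \<epsilon> (Suc s) i \<le> (\<Sum>k\<in>pEc E j. de_x E \<epsilon> s k)"
  proof -
    fix s
    have "de_x E \<epsilon> (Suc s) i = \<epsilon> * (1 - (\<Prod>k\<in>pEc E j. 1 - de_x E \<epsilon> s k))" using j by simp
    also have "\<dots> \<le> 1 - (\<Prod>k\<in>pEc E j. 1 - de_x E \<epsilon> s k)"
      using eps Y_bounds[where j=j and t=s] by (simp add: mult_left_le_one_le)
    also have "\<dots> \<le> (\<Sum>k\<in>pEc E j. de_x E \<epsilon> s k)" using Y_bounds[where j=j and t=s] by simp
    finally show "de_x E \<epsilon> (Suc s) i \<le> (\<Sum>k\<in>pEc E j. de_x E \<epsilon> s k)" .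
  qed
  then show ?thesis using that j by blast
qed

lemma per_edge:
  "\<exists>K r. 0 \<le> K \<and> (\<forall>t s. t + r \<le> s \<longrightarrow> i < length E \<longrightarrow> de_x E \<epsilon> s i \<le> K * (mx E \<epsilon> t)^2)"
proof (induction i rule: wf_induct_rule[OF wf_Rel[OF acyc]])
  case (1 i)
  show ?case
  proof (cases "i < length E")
    case False then show ?thesis by (intro exI[of _ 0]) auto
  next
    case iE: True
    have m0: "\<And>t. 0 \<le> mx E \<epsilon> t" by (rule mx_nonneg[OF ne eps])
    show ?thesis
    proof (cases "vdeg E (fst (E!i)) = 2")
      case False
      then have d3: "vdeg E (fst (E!i)) \<ge> 3" using vdeg_i[OF iE] by simp
      show ?thesis
      proof (intro exI[of _ "real (length E)^2"] exI[of _ 1] conjI allI impI)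
        show "0 \<le> real (length E)^2" by simp
        fix t s :: nat assume ts: "t + 1 \<le> s"
        then obtain s' where s': "s = Suc s'" "t \<le> s'" by (metis Suc_eq_plus1 Suc_le_D Suc_le_mono)
        have "de_x E \<epsilon> s i \<le> (real (length E) * mx E \<epsilon> s')^2" using deg3_bound[OF iE d3] s' by simp
        also have "\<dots> \<le> (real (length E) * mx E \<epsilon> t)^2"
          using mx_mono[OF ne eps s'(2)] m0 by (intro power_mono mult_left_mono) auto
        also have "\<dots> = real (length E)^2 * (mx E \<epsilon> t)^2" by (simp add: power_mult_distrib)
        finally show "de_x E \<epsilon> s i \<le> real (length E)^2 * (mx E \<epsilon> t)^2" .
      qed
    next
      case d2: True
      obtain j where j: "pEv E i = {j}" and b: "\<And>s. de_x E \<epsilon> (Suc s) i \<le> (\<Sum>k\<in>pEc E j. de_x E \<epsilon> s k)"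
        using deg2_bound[OF iE d2] by blast
      have "\<forall>k\<in>pEc E j. \<exists>K r. 0 \<le> K \<and> (\<forall>t s. t + r \<le> s \<longrightarrow> k < length E \<longrightarrow> de_x E \<epsilon> s k \<le> K * (mx E \<epsilon> t)^2)"
      proof
        fix k assume "k \<in> pEc E j"
        then have "(k, i) \<in> Rel E" using iE d2 j by (auto simp: Rel_def)
        then show "\<exists>K r. 0 \<le> K \<and> (\<forall>t s. t + r \<le> s \<longrightarrow> k < length E \<longrightarrow> de_x E \<epsilon> s k \<le> K * (mx E \<epsilon> t)^2)"
          by (rule 1)
      qed
      then obtain Kf rf where kf: "\<And>k. k \<in> pEc E j \<Longrightarrow> 0 \<le> Kf k \<and> (\<forall>t s. t + rf k \<le> s \<longrightarrow> k < length E \<longrightarrow> de_x E \<epsilon> s k \<le> Kf k * (mx E \<epsilon> t)^2)"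
        by metis
      show ?thesis
      proof (intro exI[of _ "\<Sum>k\<in>pEc E j. Kf k"] exI[of _ "Suc (\<Sum>k\<in>pEc E j. rf k)"] conjI allI impI)
        show "0 \<le> (\<Sum>k\<in>pEc E j. Kf k)" using kf by (simp add: sum_nonneg)
        fix t s :: nat assume ts: "t + Suc (\<Sum>k\<in>pEc E j. rf k) \<le> s"
        then obtain s' where s': "s = Suc s'" "t + (\<Sum>k\<in>pEc E j. rf k) \<le> s'"
          by (metis add_Suc_right Suc_le_D Suc_le_mono)
        have "de_x E \<epsilon> s i \<le> (\<Sum>k\<in>pEc E j. de_x E \<epsilon> s' k)" using b s' by simp
        also have "\<dots> \<le> (\<Sum>k\<in>pEc E j. Kf k * (mx E \<epsilon> t)^2)"
        proof (rule sum_mono)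
          fix k assume k: "k \<in> pEc E j"
          have "rf k \<le> (\<Sum>k\<in>pEc E j. rf k)" by (rule member_le_sum[OF k]) (auto simp: pEc_finite)
          then have "t + rf k \<le> s'" using s' by simp
          moreover have "k < length E" using k by (simp add: pEc_def)
          ultimately show "de_x E \<epsilon> s' k \<le> Kf k * (mx E \<epsilon> t)^2" using kf[OF k] by blast
        qed
        also have "\<dots> = (\<Sum>k\<in>pEc E j. Kf k) * (mx E \<epsilon> t)^2" by (simp add: sum_distrib_right)
        finally show "de_x E \<epsilon> s i \<le> (\<Sum>k\<in>pEc E j. Kf k) * (mx E \<epsilon> t)^2" .
      qed
    qed
  qed
qed

lemma quad_decay:
  "\<exists>K L. 1 \<le> K \<and> 1 \<le> L \<and> (\<forall>t. mx E \<epsilon> (t + L) \<le> K * (mx E \<epsilon> t)^2)"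
proof -
  have "\<forall>i\<in>{..<length E}. \<exists>K r. 0 \<le> K \<and> (\<forall>t s. t + r \<le> s \<longrightarrow> i < length E \<longrightarrow> de_x E \<epsilon> s i \<le> K * (mx E \<epsilon> t)^2)"
    using per_edge by blast
  then obtain Kf rf where kf: "\<And>i. i \<in> {..<length E} \<Longrightarrow> 0 \<le> Kf i \<and> (\<forall>t s. t + rf i \<le> s \<longrightarrow> i < length E \<longrightarrow> de_x E \<epsilon> s i \<le> Kf i * (mx E \<epsilon> t)^2)"
    by metis
  define K where "K = 1 + (\<Sum>i<length E. Kf i)"
  define L where "L = Suc (\<Sum>i<length E. rf i)"
  show ?thesis
  proof (intro exI[of _ K] exI[of _ L] conjI allI)
    have "0 \<le> (\<Sum>i<length E. Kf i)" by (rule sum_nonneg) (use kf in auto)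
    then show "1 \<le> K" by (simp add: K_def)
    show "1 \<le> L" by (simp add: L_def)
    fix t
    obtain i where i: "i < length E" "mx E \<epsilon> (t + L) = de_x E \<epsilon> (t + L) i" using mx_obtain[OF ne] by blast
    have "rf i \<le> (\<Sum>i<length E. rf i)" by (rule member_le_sum) (use i in auto)
    then have "t + rf i \<le> t + L" by (simp add: L_def)
    then have "de_x E \<epsilon> (t + L) i \<le> Kf i * (mx E \<epsilon> t)^2" using kf[of i] i by auto
    also have "\<dots> \<le> K * (mx E \<epsilon> t)^2"
    proof (rule mult_right_mono)
      have "Kf i \<le> (\<Sum>i<length E. Kf i)" by (rule member_le_sum) (use i kf in auto)
      then show "Kf i \<le> K" by (simp add: K_def)
    qed simp
    finally show "mx E \<epsilon> (t + L) \<le> K * (mx E \<epsilon> t)^2" using i by simp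
  qed
qed

end

lemma double_exp:
  fixes m :: "nat \<Rightarrow> real" and K :: real and L :: nat
  assumes m0: "\<And>t. 0 \<le> m t" and mono: "\<And>t s. t \<le> s \<Longrightarrow> m s \<le> m t"
    and lim: "m \<longlonglongrightarrow> 0" and quad: "\<And>t. m (t + L) \<le> K * (m t)^2"
    and K1: "1 \<le> K" and L1: "1 \<le> L"
  shows "\<exists>\<alpha>>0. \<exists>t0. \<forall>s\<ge>t0. m s \<le> exp (- \<alpha> * 2 powr (real s / real L))"
proof -
  have "(\<lambda>t. K * m t) \<longlonglongrightarrow> K * 0" by (intro tendsto_mult tendsto_const lim)
  then have "\<forall>\<^sub>F t in sequentially. K * m t < 1/2" by (intro order_tendstoD) auto
  then obtain t0 where "\<forall>t\<ge>t0. K * m t < 1/2" unfolding eventually_sequentially by blast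
  then have t0: "K * m t0 < 1/2" by simp
  define u where "u = (\<lambda>r. K * m (t0 + r * L))"
  have u: "u r \<le> (1/2) ^ (2 ^ r)" for r
  proof (induction r)
    case 0 then show ?case using t0 by (simp add: u_def)
  next
    case (Suc r)
    have u0: "0 \<le> u r" using m0 K1 by (simp add: u_def)
    have "u (Suc r) = K * m (t0 + r * L + L)" by (simp add: u_def algebra_simps)
    also have "\<dots> \<le> K * (K * (m (t0 + r * L))^2)" using quad K1 by (intro mult_left_mono) auto
    also have "\<dots> = (u r)^2" by (simp add: u_def power2_eq_square)
    also have "\<dots> \<le> ((1/2) ^ (2 ^ r))^2" using Suc u0 by (intro power_mono) auto
    also have "\<dots> = (1/2) ^ (2 ^ Suc r)" by (simp add: power_mult[symmetric] mult.commute)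
    finally show ?case .
  qed
  define \<alpha> where "\<alpha> = ln 2 * 2 powr (- (real t0 / real L) - 1)"
  have \<alpha>: "\<alpha> > 0" by (simp add: \<alpha>_def)
  have "\<forall>s\<ge>t0. m s \<le> exp (- \<alpha> * 2 powr (real s / real L))"
  proof (intro allI impI)
    fix s assume s: "t0 \<le> s"
    define r where "r = (s - t0) div L"
    have rL: "r * L \<le> s - t0" by (simp add: r_def minus_mod_eq_div_mult[symmetric])
    have dm: "s - t0 = r * L + (s - t0) mod L" by (metis div_mult_mod_eq r_def)
    have ml: "(s - t0) mod L < L" using L1 by simp
    have rL2: "s - t0 < (r + 1) * L" using dm ml by (simp add: algebra_simps)
    have "m s \<le> m (t0 + r * L)" using rL s by (intro mono) auto
    also have "\<dots> \<le> u r" using K1 m0[of "t0 + r * L"] by (simp add: u_def mult_le_cancel_right1)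
    also have "\<dots> \<le> (1/2) ^ (2 ^ r)" by (rule u)
    also have "\<dots> = exp (- ln 2 * 2 ^ r)"
    proof -
      have "exp (real (2 ^ r) * ln (1/2::real)) = exp (ln (1/2)) ^ (2 ^ r)" by (rule exp_of_nat_mult)
      also have "exp (ln (1/2::real)) = 1/2" by simp
      finally have a: "exp (real (2 ^ r) * ln (1/2::real)) = (1/2) ^ (2 ^ r)" .
      have b: "ln (1/2::real) = - ln 2" by (simp add: ln_div)
      have c: "real (2 ^ r) = (2::real) ^ r" by simp
      show ?thesis using a b c by (simp add: mult.commute)
    qed
    also have "\<dots> \<le> exp (- \<alpha> * 2 powr (real s / real L))"
    proof -
      have Lp: "real L > 0" using L1 by simp
      have "real (s - t0) < (real r + 1) * real L" using rL2 by (metis of_nat_add of_nat_less_iff of_nat_mult of_nat_1)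
      then have "real (s - t0) / real L < real r + 1" using Lp by (simp add: divide_less_eq)
      then have e: "real s / real L - real t0 / real L - 1 \<le> real r"
        using s Lp by (simp add: of_nat_diff diff_divide_distrib)
      have "\<alpha> * 2 powr (real s / real L) = ln 2 * 2 powr (real s / real L - real t0 / real L - 1)"
        by (simp add: \<alpha>_def powr_add[symmetric] algebra_simps)
      also have "\<dots> \<le> ln 2 * 2 powr (real r)" using e by (intro mult_left_mono powr_mono) auto
      also have "\<dots> = ln 2 * 2 ^ r" by (simp add: powr_realpow)
      finally show ?thesis by simp
    qed
    finally show "m s \<le> exp (- \<alpha> * 2 powr (real s / real L))" .
  qed
  then show ?thesis using \<alpha> by blast
qed

lemma lim_aux:
  assumes "a > 0" "g > 0" "k > 0"
  shows "((\<lambda>x::real. x powr k * (x * exp (- a * x powr g))) \<longlongrightarrow> 0) at_top"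
  using assms by real_asymp

theorem mainTheorem8:
  fixes nV nC :: nat and E :: "(nat \<times> nat) list" and \<epsilon> c c' :: real
    and T :: "nat \<Rightarrow> nat" and \<Pi> :: "nat \<Rightarrow> nat \<Rightarrow> nat \<Rightarrow> nat" and t :: "nat \<Rightarrow> nat"
    and N :: "nat \<Rightarrow> nat"
  assumes proto: "protograph nV nC E"
    and deg_ge2: "\<forall>v<nV. vdeg E v \<ge> 2"
    and G2_acyclic: "deg2_acyclic E"
    and deg2_path: "\<forall>v<nV. vdeg E v = 2 \<longrightarrow>
          (\<exists>w<nV. vdeg E w \<ge> 3 \<and> (Inl v, Inl w) \<in> (proto_adj E)\<^sup>*)"
    and eps: "0 \<le> \<epsilon>" "\<epsilon> < de_threshold E"
    and lifts: "\<forall>n. valid_lift E (T n) (\<Pi> n)"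
    and N_def: "\<forall>n. N n = T n * nV"
    and N_lim: "filterlim N at_top sequentially"
    and c_pos: "c > 0"
    and girth_log: "\<forall>n. ereal (c * ln (real (N n))) \<le> ereal_of_enat (lift_girth E (T n) (\<Pi> n))"
    and t_girth: "\<forall>n. enat (4 * t n) < lift_girth E (T n) (\<Pi> n)"
    and c'_pos: "c' > 0"
    and t_log: "\<forall>n. c' * ln (real (N n)) \<le> real (t n)"
  shows "\<exists>\<beta>>0. \<exists>\<gamma>>0.
           (\<lambda>n. block_erasure_prob nV E (T n) (\<Pi> n) \<epsilon> (t n))
             \<in> O(\<lambda>n. real (N n) * exp (- \<beta> * real (N n) powr \<gamma>))
         \<and> (\<forall>k>0. (\<lambda>n. real (N n) powr k * block_erasure_prob nV E (T n) (\<Pi> n) \<epsilon> (t n))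
                   \<longlonglongrightarrow> 0)"
proof -
  have evN: "\<forall>\<^sub>F n in sequentially. 1 \<le> N n" using N_lim by (simp add: filterlim_at_top)
  have nV0: "nV > 0"
  proof (rule ccontr)
    assume "\<not> nV > 0"
    then have "\<And>n. N n = 0" using N_def by simp
    then show False using evN by simp
  qed
  have Ene: "E \<noteq> []"
  proof
    assume "E = []"
    then have "vdeg E 0 = 0" by (simp add: vdeg_def)
    then show False using deg_ge2 nV0 by auto
  qed
  have eps1: "\<epsilon> \<le> 1" and mlim: "(\<lambda>s. mx E \<epsilon> s) \<longlonglongrightarrow> 0"
    using threshold_conv[OF Ene eps] by auto
  obtain K L where K1: "1 \<le> K" and L1: "1 \<le> L" and quad: "\<And>s. mx E \<epsilon> (s + L) \<le> K * (mx E \<epsilon> s)^2"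
    using quad_decay[OF proto deg_ge2 G2_acyclic eps(1) eps1 Ene] by blast
  obtain \<alpha> t0 where \<alpha>: "\<alpha> > 0" and de: "\<And>s. s \<ge> t0 \<Longrightarrow> mx E \<epsilon> s \<le> exp (- \<alpha> * 2 powr (real s / real L))"
    using double_exp[of "mx E \<epsilon>" L K, OF mx_nonneg[OF Ene eps(1) eps1] mx_mono[OF Ene eps(1) eps1] mlim quad K1 L1]
    by blast
  define \<gamma> where "\<gamma> = c' * ln 2 / real L"
  have \<gamma>: "\<gamma> > 0" using c'_pos L1 by (simp add: \<gamma>_def)
  let ?P = "\<lambda>n. block_erasure_prob nV E (T n) (\<Pi> n) \<epsilon> (t n)"
  let ?B = "\<lambda>n. real (N n) * exp (- \<alpha> * real (N n) powr \<gamma>)"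
  have rN: "filterlim (\<lambda>n. real (N n)) at_top sequentially"
    by (rule filterlim_compose[OF filterlim_real_sequentially N_lim])
  have lnN: "filterlim (\<lambda>n. ln (real (N n))) at_top sequentially"
    by (rule filterlim_compose[OF ln_at_top rN])
  have evt: "\<forall>\<^sub>F n in sequentially. real t0 \<le> c' * ln (real (N n))"
  proof -
    have "filterlim (\<lambda>n. c' * ln (real (N n))) at_top sequentially"
      using filterlim_tendsto_pos_mult_at_top[OF tendsto_const c'_pos lnN] .
    then show ?thesis by (simp add: filterlim_at_top)
  qed
  have Pnn: "\<And>n. 0 \<le> ?P n"
    unfolding block_erasure_prob_def using eps(1) eps1 by (intro sum_nonneg) simp
  have bound: "\<forall>\<^sub>F n in sequentially. ?P n \<le> ?B n"
    using evt evN
  proof eventually_elim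
    case (elim n)
    have Npos: "real (N n) > 0" using elim(2) by simp
    have tn: "t0 \<le> t n" using elim(1) t_log by (metis of_nat_le_iff order.trans)
    have "?P n \<le> real (T n * nV) * Max (de_x E \<epsilon> (t n) ` {..<length E})"
      by (rule block_prob_bound[OF proto lifts[rule_format] deg_ge2 eps(1) eps1 t_girth[rule_format]])
    also have "\<dots> = real (N n) * mx E \<epsilon> (t n)" using N_def by (simp add: mx_def)
    also have "\<dots> \<le> real (N n) * exp (- \<alpha> * 2 powr (real (t n) / real L))"
      using de[OF tn] Npos by simp
    also have "\<dots> \<le> ?B n"
    proof -
      have "real (N n) powr \<gamma> = exp (\<gamma> * ln (real (N n)))" using Npos by (simp add: powr_def)
      also have "\<dots> = 2 powr (c' * ln (real (N n)) / real L)"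
        by (simp add: powr_def \<gamma>_def)
      also have "\<dots> \<le> 2 powr (real (t n) / real L)"
        using t_log L1 by (intro powr_mono divide_right_mono) auto
      finally have "real (N n) powr \<gamma> \<le> 2 powr (real (t n) / real L)" .
      then have "exp (- \<alpha> * 2 powr (real (t n) / real L)) \<le> exp (- \<alpha> * real (N n) powr \<gamma>)"
        using \<alpha> by simp
      then show ?thesis using Npos by simp
    qed
    finally show ?case .
  qed
  have ev: "\<forall>\<^sub>F n in sequentially. norm (?P n) \<le> 1 * norm (?B n)"
    using bound by eventually_elim (use Pnn in simp)
  have Obig: "?P \<in> O(?B)" using bigoI[OF ev] .
  have Lim: "(\<lambda>n. real (N n) powr k * ?P n) \<longlonglongrightarrow> 0" if k: "k > 0" for k :: real
  proof -
    have hl: "((\<lambda>n. real (N n) powr k * ?B n) \<longlongrightarrow> 0) sequentially"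
      using filterlim_compose[OF lim_aux[OF \<alpha> \<gamma> k] rN] by simp
    show ?thesis
    proof (rule tendsto_sandwich[OF _ _ tendsto_const hl])
      show "\<forall>\<^sub>F n in sequentially. 0 \<le> real (N n) powr k * ?P n" using Pnn by simp
      show "\<forall>\<^sub>F n in sequentially. real (N n) powr k * ?P n \<le> real (N n) powr k * ?B n"
        using bound by eventually_elim (simp add: mult_left_mono)
    qed
  qed
  show ?thesis using Obig Lim \<alpha> \<gamma> by blast
qed

end
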